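(* Let $r\ge5$. There is a constant $C$ depending only on $r$ such that the following holds. Let $T$ be a $K_r$-tree and $G$ a graph with $x=|V(T)\cap V(G)|$. Let $E_*$ be the set of edges of $T$ that are contained in some copy of $K_r$ completed by the $K_r$-dynamics started from $G\cup T$. Then $|E_*|\le Cx$.
   Context: A graph $T$ is a $K_r$-tree if it is the union of copies $H_1,\dots,H_\vartheta$ of $K_r$ such that for each $1<i\le\vartheta$, $H_i$ shares exactly one edge with $H_1\cup\cdots\cup H_{i-1}$ (the common vertices being exactly the two endpoints of that edge). The $K_r$-dynamics on a graph repeatedly adds an edge $e$ whenever there is a copy of $K_r$ (on the vertex set of the graph) in which $e$ is the only missing edge; such a copy is said to be completed by the dynamics (when $e$ is added). *)

theory Defs
  imports Complex_Main
begin

definition edges_of :: "'a set \<Rightarrow> 'a set set" where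
  "edges_of S = {e. e \<subseteq> S \<and> card e = 2}"

definition graph :: "'a set \<Rightarrow> 'a set set \<Rightarrow> bool" where
  "graph V E \<longleftrightarrow> finite V \<and> (\<forall>e\<in>E. e \<subseteq> V \<and> card e = 2)"

text \<open>A K_r-tree given by the vertex sets H_1,...,H_theta of its K_r copies (as a list).\<close>
definition Kr_tree_seq :: "nat \<Rightarrow> 'a set list \<Rightarrow> bool" where
  "Kr_tree_seq r Hs \<longleftrightarrow> Hs \<noteq> [] \<and>
     (\<forall>i<length Hs. finite (Hs!i) \<and> card (Hs!i) = r) \<and>
     (\<forall>i. 0 < i \<and> i < length Hs \<longrightarrow>
        (\<exists>u v. u \<noteq> v \<and> Hs!i \<inter> (\<Union>j<i. Hs!j) = {u, v} \<and>
               {u, v} \<in> (\<Union>j<i. edges_of (Hs!j))))"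

definition tree_vertices :: "'a set list \<Rightarrow> 'a set" where
  "tree_vertices Hs = \<Union>(set Hs)"

definition tree_edges :: "'a set list \<Rightarrow> 'a set set" where
  "tree_edges Hs = (\<Union>H\<in>set Hs. edges_of H)"

definition dyn_step :: "nat \<Rightarrow> 'a set \<Rightarrow> 'a set set \<Rightarrow> 'a set set \<Rightarrow> bool" where
  "dyn_step r V F F' \<longleftrightarrow> (\<exists>S e. S \<subseteq> V \<and> card S = r \<and> e \<in> edges_of S \<and> e \<notin> F \<and>
      (\<forall>f\<in>edges_of S. f \<noteq> e \<longrightarrow> f \<in> F) \<and> F' = insert e F)"

definition completed_copy :: "nat \<Rightarrow> 'a set \<Rightarrow> 'a set set \<Rightarrow> 'a set \<Rightarrow> bool" where
  "completed_copy r V E S \<longleftrightarrow> S \<subseteq> V \<and> card S = r \<and>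
     (\<exists>F e. (dyn_step r V)\<^sup>*\<^sup>* E F \<and> e \<in> edges_of S \<and> e \<notin> F \<and>
            (\<forall>f\<in>edges_of S. f \<noteq> e \<longrightarrow> f \<in> F))"

end

theory Submission
  imports Defs
begin

lemma edges_of_mono: "A \<subseteq> B \<Longrightarrow> edges_of A \<subseteq> edges_of B"
  unfolding edges_of_def by auto

lemma finite_edges_of: "finite A \<Longrightarrow> finite (edges_of A)"
  unfolding edges_of_def by (rule finite_subset[of _ "Pow A"]) auto

lemma card_edges_of: "finite A \<Longrightarrow> card (edges_of A) = card A choose 2"
  unfolding edges_of_def by (rule n_subsets)

lemma edges_of_Int: "edges_of (A \<inter> B) = edges_of A \<inter> edges_of B"
  unfolding edges_of_def by auto

lemma pair_in_edges_of: "{x,y} \<in> edges_of A \<longleftrightarrow> x \<in> A \<and> y \<in> A \<and> x \<noteq> y"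
  unfolding edges_of_def by (auto simp: card_insert_if)

lemma edges_of_E: "e \<in> edges_of A \<Longrightarrow> \<exists>x y. x \<noteq> y \<and> e = {x,y} \<and> x \<in> A \<and> y \<in> A"
  unfolding edges_of_def by (auto simp: card_2_iff)

lemma edges_of_pair: "edges_of {a,b} = (if a = b then {} else {{a,b}})"
  unfolding edges_of_def
  by (auto simp: card_2_iff)

lemma tree_vertices_snoc: "tree_vertices (Hs @ [H]) = tree_vertices Hs \<union> H"
  unfolding tree_vertices_def by auto

lemma tree_edges_snoc: "tree_edges (Hs @ [H]) = tree_edges Hs \<union> edges_of H"
  unfolding tree_edges_def by auto

lemma tree_vertices_single: "tree_vertices [H] = H"
  unfolding tree_vertices_def by auto

lemma tree_edges_single: "tree_edges [H] = edges_of H"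
  unfolding tree_edges_def by auto

lemma Kr_tree_seq_single: "Kr_tree_seq r [H] \<longleftrightarrow> finite H \<and> card H = r"
  unfolding Kr_tree_seq_def by auto

lemma Kr_tree_seq_snoc:
  assumes "Kr_tree_seq r (Hs @ [H])" "Hs \<noteq> []"
  shows "Kr_tree_seq r Hs \<and> finite H \<and> card H = r \<and>
     (\<exists>u v. u \<noteq> v \<and> H \<inter> tree_vertices Hs = {u,v} \<and> {u,v} \<in> tree_edges Hs)"
proof -
  have A: "\<forall>i<length (Hs@[H]). finite ((Hs@[H])!i) \<and> card ((Hs@[H])!i) = r"
    and B: "\<forall>i. 0 < i \<and> i < length (Hs@[H]) \<longrightarrow>
        (\<exists>u v. u \<noteq> v \<and> (Hs@[H])!i \<inter> (\<Union>j<i. (Hs@[H])!j) = {u, v} \<and>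
               {u, v} \<in> (\<Union>j<i. edges_of ((Hs@[H])!j)))"
    using assms(1) unfolding Kr_tree_seq_def by auto
  have eq1: "\<And>i. i < length Hs \<Longrightarrow> (Hs@[H])!i = Hs!i" by (simp add: nth_append)
  have C1: "\<forall>i<length Hs. finite (Hs ! i) \<and> card (Hs ! i) = r"
    using A eq1 by (metis length_append_singleton less_SucI)
  have C2: "\<forall>i. 0 < i \<and> i < length Hs \<longrightarrow> (\<exists>u v. u \<noteq> v \<and> Hs ! i \<inter> (\<Union>j<i. Hs ! j) = {u, v} \<and> {u, v} \<in> (\<Union>j<i. edges_of (Hs ! j)))"
  proof (intro allI impI)
    fix i assume i: "0 < i \<and> i < length Hs"
    then have "\<exists>u v. u \<noteq> v \<and> (Hs@[H])!i \<inter> (\<Union>j<i. (Hs@[H])!j) = {u, v} \<and>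
               {u, v} \<in> (\<Union>j<i. edges_of ((Hs@[H])!j))" using B by auto
    moreover have "(\<Union>j<i. (Hs@[H])!j) = (\<Union>j<i. Hs!j)" using i eq1 by auto
    moreover have "(\<Union>j<i. edges_of ((Hs@[H])!j)) = (\<Union>j<i. edges_of (Hs!j))" using i eq1 by auto
    ultimately show "\<exists>u v. u \<noteq> v \<and> Hs ! i \<inter> (\<Union>j<i. Hs ! j) = {u, v} \<and> {u, v} \<in> (\<Union>j<i. edges_of (Hs ! j))"
      using eq1 i by auto
  qed
  have "Kr_tree_seq r Hs" unfolding Kr_tree_seq_def using C1 C2 assms(2) by blast
  moreover have "finite H \<and> card H = r" using A by (metis length_append_singleton lessI nth_append_length)
  moreover have "\<exists>u v. u \<noteq> v \<and> H \<inter> tree_vertices Hs = {u,v} \<and> {u,v} \<in> tree_edges Hs"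
  proof -
    have "0 < length Hs" using assms(2) by auto
    then obtain u v where "u \<noteq> v" "(Hs@[H])!(length Hs) \<inter> (\<Union>j<length Hs. (Hs@[H])!j) = {u, v}"
       "{u, v} \<in> (\<Union>j<length Hs. edges_of ((Hs@[H])!j))" using B[rule_format, of "length Hs"] by auto
    moreover have "(\<Union>j<length Hs. (Hs@[H])!j) = tree_vertices Hs"
      using eq1 unfolding tree_vertices_def by (auto simp: in_set_conv_nth) (metis nth_mem)
    moreover have "(\<Union>j<length Hs. edges_of ((Hs@[H])!j)) = tree_edges Hs"
      using eq1 unfolding tree_edges_def by (auto simp: in_set_conv_nth) (metis nth_mem)
    ultimately show ?thesis by auto
  qed
  ultimately show ?thesis by blast
qed

lemma Kr_tree_induct[consumes 1, case_names single snoc]: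
  assumes "Kr_tree_seq r Hs"
    and "\<And>H. finite H \<Longrightarrow> card H = r \<Longrightarrow> P [H]"
    and "\<And>Hs H u v. Kr_tree_seq r Hs \<Longrightarrow> P Hs \<Longrightarrow> finite H \<Longrightarrow> card H = r \<Longrightarrow> u \<noteq> v \<Longrightarrow>
           H \<inter> tree_vertices Hs = {u,v} \<Longrightarrow> {u,v} \<in> tree_edges Hs \<Longrightarrow> P (Hs @ [H])"
  shows "P Hs"
  using assms(1)
proof (induction Hs rule: rev_induct)
  case Nil
  then show ?case unfolding Kr_tree_seq_def by auto
next
  case (snoc H Hs)
  show ?case
  proof (cases "Hs = []")
    case True
    then show ?thesis using snoc.prems assms(2) by (auto simp: Kr_tree_seq_single)
  next
    case False
    from Kr_tree_seq_snoc[OF snoc.prems False] obtain u v where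
      "Kr_tree_seq r Hs" "finite H" "card H = r" "u \<noteq> v" "H \<inter> tree_vertices Hs = {u,v}" "{u,v} \<in> tree_edges Hs"
      by blast
    then show ?thesis using assms(3) snoc.IH by blast
  qed
qed

lemma tree_edges_sub: "e \<in> tree_edges Hs \<Longrightarrow> e \<subseteq> tree_vertices Hs \<and> card e = 2"
  unfolding tree_edges_def tree_vertices_def edges_of_def by auto

lemma tree_edges_pair: "{x,y} \<in> tree_edges Hs \<Longrightarrow> x \<in> tree_vertices Hs \<and> y \<in> tree_vertices Hs \<and> x \<noteq> y"
  using tree_edges_sub[of "{x,y}" Hs] by (auto simp: card_insert_if split: if_splits)

lemma finite_tree_vertices: "Kr_tree_seq r Hs \<Longrightarrow> finite (tree_vertices Hs)"
  unfolding Kr_tree_seq_def tree_vertices_def by (metis finite_Union finite_set in_set_conv_nth)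

lemma finite_tree_edges: "Kr_tree_seq r Hs \<Longrightarrow> finite (tree_edges Hs)"
proof -
  assume "Kr_tree_seq r Hs"
  then have "finite (tree_vertices Hs)" by (rule finite_tree_vertices)
  moreover have "tree_edges Hs \<subseteq> Pow (tree_vertices Hs)" using tree_edges_sub by auto
  ultimately show ?thesis by (metis finite_Pow_iff finite_subset)
qed

lemma blocks_sub: "B \<in> set Hs \<Longrightarrow> B \<subseteq> tree_vertices Hs"
  unfolding tree_vertices_def by auto

lemma blocks_edges: "B \<in> set Hs \<Longrightarrow> edges_of B \<subseteq> tree_edges Hs"
  unfolding tree_edges_def by auto

lemma blocks_card: "Kr_tree_seq r Hs \<Longrightarrow> B \<in> set Hs \<Longrightarrow> finite B \<and> card B = r"
  unfolding Kr_tree_seq_def by (auto simp: in_set_conv_nth)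

definition NN :: "'a set \<Rightarrow> 'a \<Rightarrow> 'a \<Rightarrow> 'a set" where "NN H u v = H - {u,v}"

context
  fixes Hs :: "'a set list" and H :: "'a set" and u v :: 'a and r :: nat
  assumes uv: "u \<noteq> v" "H \<inter> tree_vertices Hs = {u,v}" "{u,v} \<in> tree_edges Hs"
    and fH: "finite H" "card H = r"
begin


lemma NN_disj: "(NN H u v) \<inter> tree_vertices Hs = {}"
  using uv unfolding NN_def by auto

lemma uv_in: "u \<in> H" "v \<in> H" "u \<in> tree_vertices Hs" "v \<in> tree_vertices Hs"
  using uv by auto

lemma H_split: "H = (NN H u v) \<union> {u,v}"
  using uv_in unfolding NN_def by auto

lemma card_NN: "card (NN H u v) = r - 2"
  using fH uv_in uv(1) unfolding NN_def by (simp add: card_Diff_subset)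

lemma snoc_adj_N:
  assumes "n \<in> (NN H u v)"
  shows "{n,y} \<in> tree_edges (Hs @ [H]) \<longleftrightarrow> y \<in> H \<and> y \<noteq> n"
proof
  assume "{n, y} \<in> tree_edges (Hs @ [H])"
  then have "{n,y} \<in> tree_edges Hs \<or> {n,y} \<in> edges_of H" by (simp add: tree_edges_snoc)
  moreover have "{n,y} \<notin> tree_edges Hs" using tree_edges_pair[of n y Hs] NN_disj assms by auto
  ultimately show "y \<in> H \<and> y \<noteq> n" by (auto simp: pair_in_edges_of)
next
  assume "y \<in> H \<and> y \<noteq> n"
  then show "{n,y} \<in> tree_edges (Hs @ [H])" using assms unfolding NN_def
    by (auto simp: tree_edges_snoc pair_in_edges_of)
qed

lemma snoc_adj_nonN:
  assumes "x \<notin> (NN H u v)" "y \<notin> (NN H u v)"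
  shows "{x,y} \<in> tree_edges (Hs @ [H]) \<longleftrightarrow> {x,y} \<in> tree_edges Hs"
proof
  assume "{x, y} \<in> tree_edges (Hs @ [H])"
  then have "{x,y} \<in> tree_edges Hs \<or> {x,y} \<in> edges_of H" by (simp add: tree_edges_snoc)
  moreover have "{x,y} \<in> edges_of H \<Longrightarrow> {x,y} = {u,v}"
    using assms unfolding NN_def by (auto simp: pair_in_edges_of)
  ultimately show "{x,y} \<in> tree_edges Hs" using uv(3) by auto
qed (simp add: tree_edges_snoc)

lemma snoc_edge_cases:
  assumes "e \<in> tree_edges (Hs @ [H])"
  shows "e \<in> tree_edges Hs \<or> e \<in> edges_of H"
  using assms by (simp add: tree_edges_snoc)

end

lemma card_le2: "A \<subseteq> {u,v} \<Longrightarrow> card A \<le> 2"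
proof -
  assume "A \<subseteq> {u,v}"
  then have "card A \<le> card {u,v}" by (intro card_mono) auto
  also have "\<dots> \<le> 2" by (simp add: card_insert_if)
  finally show ?thesis .
qed

lemma F4_blocks:
  assumes "Kr_tree_seq r Hs" "B \<in> set Hs" "B' \<in> set Hs" "B \<noteq> B'"
  shows "card (B \<inter> B') \<le> 2"
  using assms
proof (induction Hs arbitrary: B B' rule: Kr_tree_induct)
  case (single H)
  then show ?case by auto
next
  case (snoc Hs H u v)
  have key: "card (H \<inter> C) \<le> 2" if "C \<in> set Hs" for C
  proof -
    have "H \<inter> C \<subseteq> {u,v}" using snoc.hyps(5) blocks_sub[OF that] by auto
    then show ?thesis by (rule card_le2)
  qed
  show ?case
  proof (cases "B = H")
    case True
    then have "B' \<in> set Hs" using snoc.prems by auto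
    then show ?thesis using key True by auto
  next
    case False
    note F = False
    then have B: "B \<in> set Hs" using snoc.prems by auto
    show ?thesis
    proof (cases "B' = H")
      case True
      then show ?thesis using key[OF B] True by (simp add: Int_commute)
    next
      case False
      then have "B' \<in> set Hs" using snoc.prems by auto
      then show ?thesis using snoc.IH B snoc.prems by auto
    qed
  qed
qed

lemma F4_eq:
  assumes "Kr_tree_seq r Hs" "B \<in> set Hs" "B' \<in> set Hs" "{x,y,z} \<subseteq> B" "{x,y,z} \<subseteq> B'"
    "x \<noteq> y" "x \<noteq> z" "y \<noteq> z"
  shows "B = B'"
proof (rule ccontr)
  assume "B \<noteq> B'"
  then have "card (B \<inter> B') \<le> 2" using F4_blocks assms by blast
  moreover have "{x,y,z} \<subseteq> B \<inter> B'" using assms by auto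
  moreover have "finite (B \<inter> B')" using blocks_card[OF assms(1,2)] by auto
  ultimately have "card {x,y,z} \<le> 2" by (meson card_mono le_trans)
  then show False using assms(6-8) by auto
qed

lemma F1_clique:
  assumes "Kr_tree_seq r Hs" "Q \<subseteq> tree_vertices Hs" "Q \<noteq> {}"
    "\<forall>x\<in>Q. \<forall>y\<in>Q. x \<noteq> y \<longrightarrow> {x,y} \<in> tree_edges Hs"
  shows "\<exists>B\<in>set Hs. Q \<subseteq> B"
  using assms
proof (induction Hs arbitrary: Q rule: Kr_tree_induct)
  case (single H)
  then show ?case by (auto simp: tree_vertices_single)
next
  case (snoc Hs H u v)
  show ?case
  proof (cases "Q \<inter> NN H u v \<noteq> {}")
    case True
    then obtain n where n: "n \<in> Q" "n \<in> NN H u v" by auto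
    have "Q \<subseteq> H"
    proof
      fix y assume "y \<in> Q"
      show "y \<in> H"
      proof (cases "y = n")
        case True then show ?thesis using n unfolding NN_def by auto
      next
        case False
        then have "{n,y} \<in> tree_edges (Hs @ [H])" using snoc.prems(3) n \<open>y \<in> Q\<close> by auto
        then show ?thesis using snoc_adj_N[OF snoc.hyps(4,5,6,2,3) n(2)] by auto
      qed
    qed
    then show ?thesis by auto
  next
    case False
    have "Q \<subseteq> tree_vertices Hs"
      using snoc.prems(1) False uv_in[OF snoc.hyps(4,5,6,2,3)] unfolding tree_vertices_snoc NN_def by auto
    moreover have "\<forall>x\<in>Q. \<forall>y\<in>Q. x \<noteq> y \<longrightarrow> {x,y} \<in> tree_edges Hs"
      using snoc.prems(3) False snoc_adj_nonN[OF snoc.hyps(4,5,6,2,3)] by blast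
    ultimately obtain B where "B \<in> set Hs" "Q \<subseteq> B" using snoc.IH snoc.prems(2) by blast
    then show ?thesis by auto
  qed
qed

lemma F3_common:
  assumes "Kr_tree_seq r Hs" "p \<noteq> q" "{p,q} \<notin> tree_edges Hs"
  shows "card {z. {p,z} \<in> tree_edges Hs \<and> {q,z} \<in> tree_edges Hs} \<le> 2"
  using assms
proof (induction Hs arbitrary: p q rule: Kr_tree_induct)
  case (single H)
  have "\<not> (p \<in> H \<and> q \<in> H)" using single by (auto simp: tree_edges_single pair_in_edges_of)
  then have "{z. {p,z} \<in> tree_edges [H] \<and> {q,z} \<in> tree_edges [H]} = {}"
    by (auto simp: tree_edges_single pair_in_edges_of)
  then show ?case by (metis card.empty le0)
next
  case (snoc Hs H u v)
  let ?E = "tree_edges (Hs @ [H])"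
  let ?N = "NN H u v"
  note adjN = snoc_adj_N[OF snoc.hyps(4,5,6,2,3)]
  note adjO = snoc_adj_nonN[OF snoc.hyps(4,5,6,2,3)]
  have key: "card {z. {a,z} \<in> ?E \<and> {b,z} \<in> ?E} \<le> 2" if ab: "a \<in> ?N" "a \<noteq> b" "{a,b} \<notin> ?E" for a b
  proof -
    have bH: "b \<notin> H" using adjN[OF ab(1), of b] ab by auto
    have "{z. {a,z} \<in> ?E \<and> {b,z} \<in> ?E} \<subseteq> {u,v}"
    proof
      fix z assume z: "z \<in> {z. {a,z} \<in> ?E \<and> {b,z} \<in> ?E}"
      then have "z \<in> H" using adjN[OF ab(1)] by auto
      moreover have "z \<notin> ?N"
      proof
        assume "z \<in> ?N"
        then have "b \<in> H" using adjN[of z b] z by (auto simp: insert_commute)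
        then show False using bH by auto
      qed
      ultimately show "z \<in> {u,v}" unfolding NN_def by auto
    qed
    then show ?thesis by (rule card_le2)
  qed
  show ?case
  proof (cases "p \<in> ?N")
    case True
    then show ?thesis using key snoc.prems by blast
  next
    case pN: False
    show ?thesis
    proof (cases "q \<in> ?N")
      case True
      have "{z. {p,z} \<in> ?E \<and> {q,z} \<in> ?E} = {z. {q,z} \<in> ?E \<and> {p,z} \<in> ?E}" by auto
      moreover have "{q,p} \<notin> ?E" using snoc.prems by (simp add: insert_commute)
      ultimately show ?thesis using key[OF True] snoc.prems by auto
    next
      case qN: False
      have noN: "z \<notin> ?N" if "{p,z} \<in> ?E" "{q,z} \<in> ?E" for z
      proof
        assume zN: "z \<in> ?N"
        then have "p \<in> H" "q \<in> H" using adjN[OF zN] that by (auto simp: insert_commute)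
        then have "p \<in> {u,v}" "q \<in> {u,v}" using pN qN unfolding NN_def by auto
        then have "{p,q} = {u,v}" using snoc.prems(1) by auto
        then show False using snoc.prems(2) snoc.hyps(6) by (auto simp: tree_edges_snoc)
      qed
      have "{z. {p,z} \<in> ?E \<and> {q,z} \<in> ?E} = {z. {p,z} \<in> tree_edges Hs \<and> {q,z} \<in> tree_edges Hs}"
      proof (rule Collect_cong)
        fix z
        show "({p,z} \<in> ?E \<and> {q,z} \<in> ?E) \<longleftrightarrow> ({p,z} \<in> tree_edges Hs \<and> {q,z} \<in> tree_edges Hs)"
        proof
          assume a: "{p,z} \<in> ?E \<and> {q,z} \<in> ?E"
          then have "z \<notin> ?N" using noN by blast
          then show "{p,z} \<in> tree_edges Hs \<and> {q,z} \<in> tree_edges Hs"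
            using a adjO[OF pN] adjO[OF qN] by blast
        qed (auto simp: tree_edges_snoc)
      qed
      moreover have "{p,q} \<notin> tree_edges Hs" using snoc.prems(2) by (auto simp: tree_edges_snoc)
      ultimately show ?thesis using snoc.IH snoc.prems(1) by auto
    qed
  qed
qed

lemma two_choose: "2 * (n choose 2) = n * (n - 1)"
proof (induction n)
  case (Suc n)
  have "Suc n choose 2 = n + (n choose 2)" by (simp add: numeral_2_eq_2)
  then show ?case using Suc by (cases n) (auto simp: algebra_simps)
qed simp

lemma dens_arith:
  fixes i j r :: nat
  assumes "i \<le> 2" "j + 2 \<le> r"
  shows "(i+j)*(i+j-1) \<le> i*(i-1) + (r+1)*j"
proof -
  have "i = 0 \<or> i = 1 \<or> i = 2" using assms by auto
  moreover
  { assume "i = 0"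
    moreover have "j*(j-1) \<le> j*(r+1)" using assms by (intro mult_le_mono2) auto
    ultimately have ?thesis by (simp add: mult.commute) }
  moreover
  { assume "i = 1"
    moreover have "(1+j)*j \<le> (r+1)*j" using assms by (intro mult_le_mono1) auto
    ultimately have ?thesis by simp }
  moreover
  { assume i2: "i = 2"
    have "(2+j)*(1+j) = 2 + j*(j+3)" by (simp add: algebra_simps)
    moreover have "j*(j+3) \<le> j*(r+1)" using assms by (intro mult_le_mono2) auto
    ultimately have ?thesis using i2 by (simp add: mult.commute) }
  ultimately show ?thesis by blast
qed

lemma density:
  assumes "Kr_tree_seq r Hs" "finite Y"
  shows "2 * card (tree_edges Hs \<inter> edges_of Y) \<le> (r+1) * card Y"
  using assms
proof (induction Hs arbitrary: Y rule: Kr_tree_induct)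
  case (single H)
  have "tree_edges [H] \<inter> edges_of Y = edges_of (H \<inter> Y)" by (simp add: tree_edges_single edges_of_Int)
  moreover have "card (H \<inter> Y) \<le> r" using single by (metis card_mono inf_le1)
  ultimately have "2 * card (tree_edges [H] \<inter> edges_of Y) = card (H \<inter> Y) * (card (H \<inter> Y) - 1)"
    using single by (simp add: card_edges_of two_choose)
  also have "\<dots> \<le> card Y * (r + 1)" using \<open>card (H \<inter> Y) \<le> r\<close> single
    by (intro mult_le_mono) (auto simp: card_mono)
  finally show ?case by (simp add: mult.commute)
next
  case (snoc Hs H u v)
  let ?N = "NN H u v"
  let ?Y1 = "Y - ?N"
  let ?U = "{u,v} \<inter> Y"
  define i where "i = card ?U"
  define j where "j = card (Y \<inter> ?N)"
  have fN: "finite ?N" using snoc.hyps(2) unfolding NN_def by auto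
  have sub: "tree_edges (Hs @ [H]) \<inter> edges_of Y \<subseteq>
      (tree_edges Hs \<inter> edges_of ?Y1) \<union> (edges_of (H \<inter> Y) - edges_of ?U)"
  proof
    fix e assume e: "e \<in> tree_edges (Hs @ [H]) \<inter> edges_of Y"
    show "e \<in> (tree_edges Hs \<inter> edges_of ?Y1) \<union> (edges_of (H \<inter> Y) - edges_of ?U)"
    proof (cases "e \<in> tree_edges Hs")
      case True
      then have "e \<subseteq> tree_vertices Hs" using tree_edges_sub by auto
      then have "e \<subseteq> ?Y1" using e NN_disj[OF snoc.hyps(4,5,6,2,3)] unfolding edges_of_def by auto
      then show ?thesis using True e unfolding edges_of_def by auto
    next
      case False
      then have eH: "e \<in> edges_of H" using e by (auto simp: tree_edges_snoc)
      have "e \<notin> edges_of ?U"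
      proof
        assume "e \<in> edges_of ?U"
        then obtain x y where "x \<noteq> y" "e = {x,y}" "x \<in> {u,v}" "y \<in> {u,v}"
          using edges_of_E[of e "{u,v} \<inter> Y"] by blast
        then have "e = {u,v}" by auto
        then show False using False snoc.hyps(6) by auto
      qed
      then show ?thesis using eH e by (auto simp: edges_of_Int)
    qed
  qed
  have fY1: "finite ?Y1" using snoc.prems by auto
  have c1: "card (tree_edges (Hs @ [H]) \<inter> edges_of Y) \<le>
      card (tree_edges Hs \<inter> edges_of ?Y1) + card (edges_of (H \<inter> Y) - edges_of ?U)"
    by (rule order_trans[OF card_mono[OF _ sub] card_Un_le])
      (use snoc.prems snoc.hyps(2) in \<open>auto intro!: finite_edges_of\<close>)
  have HY: "H \<inter> Y = ?U \<union> (Y \<inter> ?N)" using uv_in[OF snoc.hyps(4,5,6,2,3)] unfolding NN_def by auto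
  have dj: "?U \<inter> (Y \<inter> ?N) = {}" unfolding NN_def by auto
  have cHY: "card (H \<inter> Y) = i + j" unfolding i_def j_def HY using dj snoc.prems fN
    by (simp add: card_Un_disjoint)
  have c2: "card (edges_of (H \<inter> Y) - edges_of ?U) = (i + j choose 2) - (i choose 2)"
  proof -
    have "edges_of ?U \<subseteq> edges_of (H \<inter> Y)" using uv_in[OF snoc.hyps(4,5,6,2,3)]
      by (intro edges_of_mono) auto
    then show ?thesis using snoc.prems snoc.hyps(2)
      by (simp add: card_Diff_subset finite_edges_of card_edges_of cHY i_def)
  qed
  have i2: "i \<le> 2" unfolding i_def by (rule card_le2) auto
  have jr: "j + 2 \<le> r"
  proof -
    have "j \<le> card ?N" unfolding j_def using fN by (simp add: card_mono)
    moreover have "card {u,v} \<le> r" using card_mono[OF snoc.hyps(2), of "{u,v}"] uv_in[OF snoc.hyps(4,5,6,2,3)] snoc.hyps(3) by auto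
    ultimately show ?thesis using card_NN[OF snoc.hyps(4,5,6,2,3)] snoc.hyps(4) by auto
  qed
  have cY: "card Y = card ?Y1 + j"
  proof -
    have "Y = ?Y1 \<union> (Y \<inter> ?N)" by auto
    moreover have "card (?Y1 \<union> (Y \<inter> ?N)) = card ?Y1 + card (Y \<inter> ?N)"
      by (rule card_Un_disjoint) (use snoc.prems in auto)
    ultimately show ?thesis unfolding j_def by simp
  qed
  have IH: "2 * card (tree_edges Hs \<inter> edges_of ?Y1) \<le> (r+1) * card ?Y1" using snoc.IH fY1 by blast
  have ar: "(i+j)*(i+j-1) \<le> i*(i-1) + (r+1)*j" by (rule dens_arith[OF i2 jr])
  have "2 * ((i + j choose 2) - (i choose 2)) = 2 * (i + j choose 2) - 2 * (i choose 2)"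
    by (rule diff_mult_distrib2)
  also have "\<dots> = (i+j)*(i+j-1) - i*(i-1)" by (simp only: two_choose)
  finally have "2 * card (edges_of (H \<inter> Y) - edges_of ?U) \<le> (r+1)*j" using c2 ar by linarith
  moreover have "(r+1) * card Y = (r+1) * card ?Y1 + (r+1) * j" using cY by (simp only: add_mult_distrib2)
  ultimately show ?case using c1 IH by linarith
qed

definition conn :: "'a set set \<Rightarrow> 'a set \<Rightarrow> 'a \<Rightarrow> 'a \<Rightarrow> bool" where
  "conn E Y = (\<lambda>x y. x \<in> Y \<and> y \<in> Y \<and> {x,y} \<in> E)\<^sup>*\<^sup>*"

definition comps :: "'a set set \<Rightarrow> 'a set \<Rightarrow> 'a set set" where
  "comps E Y = (\<lambda>y. {z. conn E Y y z}) ` Y"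

lemma conn_refl: "conn E Y a a"
  unfolding conn_def by simp

lemma conn_step: "conn E Y a c \<Longrightarrow> c \<in> Y \<Longrightarrow> d \<in> Y \<Longrightarrow> {c,d} \<in> E \<Longrightarrow> conn E Y a d"
  unfolding conn_def by (rule rtranclp.rtrancl_into_rtrancl) auto

lemma conn_edge: "c \<in> Y \<Longrightarrow> d \<in> Y \<Longrightarrow> {c,d} \<in> E \<Longrightarrow> conn E Y c d"
  by (rule conn_step[OF conn_refl])

lemma conn_trans: "conn E Y a b \<Longrightarrow> conn E Y b c \<Longrightarrow> conn E Y a c"
  unfolding conn_def by (rule rtranclp_trans)

lemma conn_sym: "conn E Y a b \<Longrightarrow> conn E Y b a"
  unfolding conn_def
proof (induction rule: rtranclp_induct)
  case (step y z)
  then have "(\<lambda>x y. x \<in> Y \<and> y \<in> Y \<and> {x,y} \<in> E) z y" by (simp add: insert_commute)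
  then show ?case using step.IH by (rule converse_rtranclp_into_rtranclp)
qed simp

lemma conn_mono: "Y \<subseteq> Y' \<Longrightarrow> conn E Y a b \<Longrightarrow> conn E Y' a b"
  unfolding conn_def by (erule rtranclp_mono[THEN predicate2D, rotated]) auto

lemma factor_card:
  assumes "finite A" "\<forall>x\<in>A. \<forall>y\<in>A. f x = f y \<longrightarrow> g x = g y"
  shows "card (g ` A) \<le> card (f ` A)"
proof -
  define \<phi> where "\<phi> c = g (SOME x. x \<in> A \<and> f x = c)" for c
  have "g ` A = \<phi> ` (f ` A)"
  proof (intro equalityI subsetI)
    fix z assume "z \<in> g ` A"
    then obtain x where x: "x \<in> A" "z = g x" by auto
    have "\<exists>x'. x' \<in> A \<and> f x' = f x" using x by auto
    then have "(SOME x'. x' \<in> A \<and> f x' = f x) \<in> A \<and> f (SOME x'. x' \<in> A \<and> f x' = f x) = f x"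
      by (rule someI_ex)
    then have "\<phi> (f x) = g x" unfolding \<phi>_def using assms(2) x(1) by metis
    then show "z \<in> \<phi> ` (f ` A)" using x by force
  next
    fix z assume "z \<in> \<phi> ` (f ` A)"
    then obtain x where x: "x \<in> A" "z = \<phi> (f x)" by auto
    have "\<exists>x'. x' \<in> A \<and> f x' = f x" using x by auto
    then have "(SOME x'. x' \<in> A \<and> f x' = f x) \<in> A" by (metis (mono_tags, lifting) someI_ex)
    then show "z \<in> g ` A" unfolding x(2) \<phi>_def by auto
  qed
  then show ?thesis using assms(1) by (simp add: card_image_le)
qed

lemma factor_card_strict:
  assumes "finite A" "\<forall>x\<in>A. \<forall>y\<in>A. f x = f y \<longrightarrow> g x = g y"
    "a \<in> A" "b \<in> A" "f a \<noteq> f b" "g a = g b"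
  shows "card (g ` A) < card (f ` A)"
proof -
  define \<phi> where "\<phi> c = g (SOME x. x \<in> A \<and> f x = c)" for c
  have phi: "\<phi> (f x) = g x" if "x \<in> A" for x
  proof -
    have "\<exists>x'. x' \<in> A \<and> f x' = f x" using that by auto
    then have "(SOME x'. x' \<in> A \<and> f x' = f x) \<in> A \<and> f (SOME x'. x' \<in> A \<and> f x' = f x) = f x"
      by (rule someI_ex)
    then show "\<phi> (f x) = g x" unfolding \<phi>_def using assms(2) that by metis
  qed
  have "g ` A = \<phi> ` (f ` A)"
    by (simp add: image_image phi cong: image_cong)
  moreover have "\<not> inj_on \<phi> (f ` A)"
  proof
    assume "inj_on \<phi> (f ` A)"
    moreover have "\<phi> (f a) = \<phi> (f b)" using phi assms(3,4,6) by simp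
    ultimately have "f a = f b" using assms(3,4) unfolding inj_on_def by blast
    then show False using assms(5) by simp
  qed
  moreover have fin: "finite (f ` A)" using assms(1) by auto
  moreover have "card (\<phi> ` (f ` A)) \<le> card (f ` A)" using fin by (rule card_image_le)
  ultimately show ?thesis using inj_on_iff_eq_card[OF fin, of \<phi>] by simp
qed

lemma comps_card_le: "finite Y \<Longrightarrow> card (comps E Y) \<le> card Y"
  unfolding comps_def by (rule card_image_le)

lemma comp_eq: "conn E Y y y' \<Longrightarrow> {z. conn E Y y z} = {z. conn E Y y' z}"
proof (intro Collect_cong iffI)
  fix z assume a: "conn E Y y y'" "conn E Y y z"
  show "conn E Y y' z" by (rule conn_trans[OF conn_sym[OF a(1)] a(2)])
next
  fix z assume a: "conn E Y y y'" "conn E Y y' z"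
  show "conn E Y y z" by (rule conn_trans[OF a])
qed

lemma comp_eq_iff: "{z. conn E Y y z} = {z. conn E Y y' z} \<longleftrightarrow> conn E Y y y'"
proof
  assume "{z. conn E Y y z} = {z. conn E Y y' z}"
  moreover have "y' \<in> {z. conn E Y y' z}" by (simp add: conn_refl)
  ultimately have "y' \<in> {z. conn E Y y z}" by (simp only:)
  then show "conn E Y y y'" by simp
qed (rule comp_eq)

lemma comps_attach:
  assumes "finite Y" "\<forall>z\<in>Z. \<exists>y\<in>Y. {z,y} \<in> E"
  shows "card (comps E (Y \<union> Z)) \<le> card (comps E Y)"
proof -
  let ?g = "\<lambda>y. {z. conn E (Y \<union> Z) y z}"
  let ?f = "\<lambda>y. {z. conn E Y y z}"
  have "comps E (Y \<union> Z) = ?g ` Y"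
  proof -
    have "?g z \<in> ?g ` Y" if zZ: "z \<in> Z" for z
    proof -
      obtain y where y: "y \<in> Y" "{z,y} \<in> E" using assms(2) zZ by auto
      have "conn E (Y \<union> Z) z y" using y zZ by (intro conn_edge) auto
      then have "?g z = ?g y" by (rule comp_eq)
      then show ?thesis using y by auto
    qed
    then show ?thesis unfolding comps_def by auto
  qed
  moreover have "card (?g ` Y) \<le> card (?f ` Y)"
  proof (rule factor_card[OF assms(1)], intro ballI impI)
    fix x y assume "x \<in> Y" "y \<in> Y" "?f x = ?f y"
    then have "conn E Y x y" using comp_eq_iff by fast
    then have "conn E (Y \<union> Z) x y" by (rule conn_mono[rotated]) auto
    then show "?g x = ?g y" by (rule comp_eq)
  qed
  ultimately show ?thesis unfolding comps_def by simp
qed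

lemma comps_merge:
  assumes "finite Y" "p \<notin> Y" "a \<in> Y" "b \<in> Y" "{p,a} \<in> E" "{p,b} \<in> E" "\<not> conn E Y a b"
  shows "card (comps E (insert p Y)) < card (comps E Y)"
proof -
  let ?Y = "insert p Y"
  let ?g = "\<lambda>y. {z. conn E ?Y y z}"
  let ?f = "\<lambda>y. {z. conn E Y y z}"
  have pa: "conn E ?Y p a" "conn E ?Y p b" using assms by (auto intro: conn_edge)
  have "comps E ?Y = ?g ` Y"
  proof -
    have "?g p = ?g a" by (rule comp_eq[OF pa(1)])
    then show ?thesis unfolding comps_def using assms(3) by auto
  qed
  moreover have "card (?g ` Y) < card (?f ` Y)"
  proof (rule factor_card_strict[OF assms(1) _ assms(3,4)])
    show "\<forall>x\<in>Y. \<forall>y\<in>Y. ?f x = ?f y \<longrightarrow> ?g x = ?g y"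
    proof (intro ballI impI)
      fix x y assume "x \<in> Y" "y \<in> Y" "?f x = ?f y"
      then have "conn E Y x y" using comp_eq_iff by fast
      then have "conn E ?Y x y" by (rule conn_mono[rotated]) auto
      then show "?g x = ?g y" by (rule comp_eq)
    qed
    show "?f a \<noteq> ?f b" using comp_eq_iff assms(7) by fast
    have "conn E ?Y a b" by (rule conn_trans[OF conn_sym[OF pa(1)] pa(2)])
    then show "?g a = ?g b" by (rule comp_eq)
  qed
  ultimately show ?thesis unfolding comps_def by simp
qed


context
  fixes Hs :: "'a set list" and H :: "'a set" and u v :: 'a and r :: nat
  assumes uv: "u \<noteq> v" "H \<inter> tree_vertices Hs = {u,v}" "{u,v} \<in> tree_edges Hs"
    and fH: "finite H" "card H = r"
begin

lemma L_exit:
  assumes "conn (tree_edges (Hs @ [H])) Y a c" "a \<in> NN H u v"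
  shows "c \<in> NN H u v \<or> (\<exists>w\<in>Y \<inter> {u,v}. True)"
  using assms(1) unfolding conn_def
proof (induction rule: rtranclp_induct)
  case base
  then show ?case using assms(2) by simp
next
  case (step c d)
  show ?case
  proof (cases "c \<in> NN H u v")
    case True
    then have "d \<in> H" using snoc_adj_N[OF uv fH True, of d] step.hyps(2) by auto
    then show ?thesis using step.hyps(2) unfolding NN_def by auto
  next
    case False
    then show ?thesis using step.IH by auto
  qed
qed

lemma L_short:
  assumes "conn (tree_edges (Hs @ [H])) Y a c" "a \<notin> NN H u v"
  shows "(c \<notin> NN H u v \<longrightarrow> conn (tree_edges Hs) (Y - NN H u v) a c) \<and>
         (c \<in> NN H u v \<longrightarrow> (\<exists>w\<in>Y \<inter> {u,v}. conn (tree_edges Hs) (Y - NN H u v) a w))"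
  using assms(1) unfolding conn_def[of "tree_edges (Hs @ [H])"]
proof (induction rule: rtranclp_induct)
  case base
  then show ?case using assms(2) by (simp add: conn_refl)
next
  case (step c d)
  let ?N = "NN H u v"
  have cd: "c \<in> Y" "d \<in> Y" "{c,d} \<in> tree_edges (Hs @ [H])" using step.hyps(2) by auto
  have uvN: "u \<notin> ?N" "v \<notin> ?N" unfolding NN_def by auto
  show ?case
  proof (cases "c \<in> ?N")
    case cN: True
    then have "d \<in> H" using snoc_adj_N[OF uv fH cN, of d] cd by auto
    show ?thesis
    proof (cases "d \<in> ?N")
      case True
      then show ?thesis using step.IH cN by auto
    next
      case False
      then have d: "d \<in> {u,v}" using \<open>d \<in> H\<close> unfolding NN_def by auto
      obtain w where w: "w \<in> Y \<inter> {u,v}" "conn (tree_edges Hs) (Y - ?N) a w" using step.IH cN by auto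
      have "conn (tree_edges Hs) (Y - ?N) a d"
      proof (cases "w = d")
        case True then show ?thesis using w by simp
      next
        case False
        then have "{w,d} = {u,v}" using w d by auto
        then have "{w,d} \<in> tree_edges Hs" using uv(3) by simp
        then show ?thesis using conn_step[OF w(2)] w d cd uvN by auto
      qed
      then show ?thesis using False by simp
    qed
  next
    case cN: False
    show ?thesis
    proof (cases "d \<in> ?N")
      case True
      then have "c \<in> H" using snoc_adj_N[OF uv fH True, of c] cd by (auto simp: insert_commute)
      then have "c \<in> {u,v}" using cN unfolding NN_def by auto
      then show ?thesis using step.IH cN cd True by auto
    next
      case False
      then have "{c,d} \<in> tree_edges Hs" using snoc_adj_nonN[OF uv fH cN False] cd by simp
      then have "conn (tree_edges Hs) (Y - ?N) a d"
        using conn_step[of "tree_edges Hs" "Y - ?N" a c d] step.IH cN False cd by auto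
      then show ?thesis using False by simp
    qed
  qed
qed

end

lemma separator:
  assumes "Kr_tree_seq r Hs" "p \<notin> Y" "a \<in> Y" "b \<in> Y" "{p,a} \<in> tree_edges Hs" "{p,b} \<in> tree_edges Hs"
    "{a,b} \<notin> tree_edges Hs" "a \<noteq> b" "conn (tree_edges Hs) Y a b"
  shows "\<exists>s\<in>Y. {s,p} \<in> tree_edges Hs \<and> ({s,a} \<in> tree_edges Hs \<or> {s,b} \<in> tree_edges Hs)"
  using assms
proof (induction Hs arbitrary: Y p a b rule: Kr_tree_induct)
  case (single H)
  then have "a \<in> H" "b \<in> H" by (auto simp: tree_edges_single pair_in_edges_of)
  then have "{a,b} \<in> tree_edges [H]" using single by (auto simp: tree_edges_single pair_in_edges_of)
  then show ?case using single by simp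
next
  case (snoc Hs H u v)
  let ?E = "tree_edges (Hs @ [H])"
  let ?N = "NN H u v"
  note adjN = snoc_adj_N[OF snoc.hyps(4,5,6,2,3)]
  note adjO = snoc_adj_nonN[OF snoc.hyps(4,5,6,2,3)]
  have uvE: "{u,v} \<in> ?E" using snoc.hyps(6) by (simp add: tree_edges_snoc)
  have uvN: "u \<notin> ?N" "v \<notin> ?N" unfolding NN_def by auto
  show ?case
  proof (cases "p \<in> ?N")
    case True
    then have "a \<in> H" "b \<in> H" using adjN[OF True] snoc.prems by auto
    then have "{a,b} \<in> ?E" using snoc.prems(7) by (auto simp: tree_edges_snoc pair_in_edges_of)
    then show ?thesis using snoc.prems by simp
  next
    case pN: False
    have side: "\<exists>s\<in>Y. {s,p} \<in> ?E \<and> {s,x} \<in> ?E"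
      if x: "x \<in> ?N" "{p,x} \<in> ?E" "x \<in> Y" and yy: "y \<notin> H" "conn ?E Y x y" for x y
    proof -
      have "p \<in> H" using adjN[OF x(1), of p] x(2) by (auto simp: insert_commute)
      then have pu: "p \<in> {u,v}" using pN unfolding NN_def by auto
      have "y \<notin> ?N" using yy unfolding NN_def by auto
      then obtain w where w: "w \<in> Y" "w \<in> {u,v}"
        using L_exit[OF snoc.hyps(4,5,6,2,3) yy(2) x(1)] by auto
      have "w \<noteq> p" using w snoc.prems(1) by auto
      then have "{w,p} = {u,v}" using w pu by auto
      then have "{w,p} \<in> ?E" using uvE by simp
      moreover have "{w,x} \<in> ?E" using adjN[OF x(1), of w] w uvN x(1) uv_in[OF snoc.hyps(4,5,6,2,3)] unfolding NN_def by (auto simp: insert_commute)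
      ultimately show ?thesis using w by auto
    qed
    show ?thesis
    proof (cases "a \<in> ?N")
      case True
      have "b \<notin> H"
      proof
        assume "b \<in> H"
        then have "{a,b} \<in> ?E" using adjN[OF True, of b] snoc.prems(7) by auto
        then show False using snoc.prems(6) by simp
      qed
      then show ?thesis using side[OF True snoc.prems(4,2) \<open>b \<notin> H\<close> snoc.prems(8)] by auto
    next
      case aN: False
      show ?thesis
      proof (cases "b \<in> ?N")
        case True
        have "a \<notin> H"
        proof
          assume "a \<in> H"
          then have "{b,a} \<in> ?E" using adjN[OF True, of a] snoc.prems(7) by auto
          then show False using snoc.prems(6) by (simp add: insert_commute)
        qed
        then show ?thesis using side[OF True snoc.prems(5,3) \<open>a \<notin> H\<close> conn_sym[OF snoc.prems(8)]] by auto
      next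
        case bN: False
        have c': "conn (tree_edges Hs) (Y - ?N) a b"
          using L_short[OF snoc.hyps(4,5,6,2,3) snoc.prems(8) aN] bN by simp
        have "\<exists>s\<in>Y - ?N. {s,p} \<in> tree_edges Hs \<and> ({s,a} \<in> tree_edges Hs \<or> {s,b} \<in> tree_edges Hs)"
        proof (rule snoc.IH)
          show "p \<notin> Y - ?N" "a \<in> Y - ?N" "b \<in> Y - ?N" using snoc.prems aN bN by auto
          show "{p,a} \<in> tree_edges Hs" "{p,b} \<in> tree_edges Hs" "{a,b} \<notin> tree_edges Hs"
            using snoc.prems(4,5,6) adjO pN aN bN by auto
          show "a \<noteq> b" by fact
          show "conn (tree_edges Hs) (Y - ?N) a b" by fact
        qed
        then show ?thesis by (auto simp: tree_edges_snoc)
      qed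
    qed
  qed
qed

definition ecount :: "'a set set \<Rightarrow> 'a set \<Rightarrow> nat" where
  "ecount E Y = card (E \<inter> edges_of Y)"

definition pot :: "nat \<Rightarrow> 'a set set \<Rightarrow> 'a set \<Rightarrow> int" where
  "pot r E Y = 2 * int (ecount E Y) - int (r+1) * int (card Y) - 2 * int (card (comps E Y))"

lemma gain_lemma:
  assumes "finite Y" "finite Z" "Y \<inter> Z = {}" "New \<subseteq> E \<inter> edges_of (Y \<union> Z)" "New \<inter> edges_of Y = {}"
    "card (comps E (Y \<union> Z)) + d \<le> card (comps E Y)"
  shows "pot r E (Y \<union> Z) \<ge> pot r E Y + 2 * int (card New) - int (r+1) * int (card Z) + 2 * int d"
proof -
  have fin: "finite (E \<inter> edges_of (Y \<union> Z))" using assms(1,2) by (simp add: finite_edges_of)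
  have "(E \<inter> edges_of Y) \<union> New \<subseteq> E \<inter> edges_of (Y \<union> Z)"
    using assms(4) edges_of_mono[of Y "Y \<union> Z"] by auto
  then have "card ((E \<inter> edges_of Y) \<union> New) \<le> ecount E (Y \<union> Z)"
    unfolding ecount_def using fin by (rule card_mono[rotated])
  moreover have "card ((E \<inter> edges_of Y) \<union> New) = ecount E Y + card New"
    unfolding ecount_def
    by (rule card_Un_disjoint) (use assms(1,5) finite_subset[OF assms(4) fin] in \<open>auto simp: finite_edges_of\<close>)
  ultimately have e: "ecount E (Y \<union> Z) \<ge> ecount E Y + card New" by simp
  have c: "card (Y \<union> Z) = card Y + card Z" using assms(1-3) by (simp add: card_Un_disjoint)
  show ?thesis unfolding pot_def using e c assms(6) by (simp add: algebra_simps)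
qed

lemma pair_image_card:
  assumes "finite M" "p \<notin> M"
  shows "card ((\<lambda>m. {p,m}) ` M) = card M"
proof (rule card_image)
  show "inj_on (\<lambda>m. {p,m}) M" unfolding inj_on_def using assms(2) by (auto simp: doubleton_eq_iff)
qed

locale kr_setting =
  fixes r :: nat and Hs :: "'a set list" and X :: "'a set"
  assumes kr: "Kr_tree_seq r Hs" and r5: "r \<ge> 5" and XV: "X \<subseteq> tree_vertices Hs"
begin

abbreviation "E \<equiv> tree_edges Hs"
abbreviation "VT \<equiv> tree_vertices Hs"

lemma finVT: "finite VT" using kr by (rule finite_tree_vertices)

definition good :: "'a set \<Rightarrow> bool" where
  "good Y \<longleftrightarrow> X \<subseteq> Y \<and> Y \<subseteq> VT \<and>
     int (card Y) - int (card X) \<le> int (2*r-4) * (pot r E Y - pot r E X)"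

lemma good_X: "good X" unfolding good_def using XV by simp

lemma extend_good:
  assumes "good Y" "Z \<subseteq> VT" "Y \<inter> Z = {}" "Z \<noteq> {}" "card Z \<le> 2*r-4"
    "pot r E (Y \<union> Z) \<ge> pot r E Y + 1"
  shows "good (Y \<union> Z) \<and> card (Y \<union> Z) > card Y"
proof -
  have fY: "finite Y" "finite Z" using assms(1,2) finVT unfolding good_def by (auto intro: finite_subset)
  have c: "card (Y \<union> Z) = card Y + card Z" using fY assms(3) by (simp add: card_Un_disjoint)
  have "card Z > 0" using fY assms(4) by auto
  moreover have "int (card (Y \<union> Z)) - int (card X) \<le> int (2*r-4) * (pot r E (Y \<union> Z) - pot r E X)"
  proof -
    have "int (card Y) - int (card X) \<le> int (2*r-4) * (pot r E Y - pot r E X)"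
      using assms(1) unfolding good_def by simp
    moreover have "int (card Z) \<le> int (2*r-4) * 1" using assms(5) by simp
    moreover have "int (2*r-4) * (pot r E Y - pot r E X) + int (2*r-4) * 1 \<le> int (2*r-4) * (pot r E (Y \<union> Z) - pot r E X)"
    proof -
      have "pot r E Y - pot r E X + 1 \<le> pot r E (Y \<union> Z) - pot r E X" using assms(6) by simp
      then have "int (2*r-4) * (pot r E Y - pot r E X + 1) \<le> int (2*r-4) * (pot r E (Y \<union> Z) - pot r E X)"
        by (rule mult_left_mono) simp
      then show ?thesis by (simp add: distrib_left)
    qed
    ultimately show ?thesis using c by simp
  qed
  ultimately show ?thesis using assms(1,2) c unfolding good_def by auto
qed

lemma exists_max_good: "\<exists>K. good K \<and> (\<forall>Y. good Y \<longrightarrow> card Y \<le> card K)"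
proof -
  have "\<forall>y. good y \<longrightarrow> card y < card VT + 1"
    using finVT unfolding good_def by (auto simp: card_mono less_Suc_eq_le)
  then show ?thesis using Lattices_Big.ex_has_greatest_nat[of good X card "card VT + 1"] good_X by blast
qed


lemma two_choose_int: "2 * int (n choose 2) = int n * (int n - 1)"
proof -
  have "2 * int (n choose 2) = int (n * (n - 1))" using two_choose[of n] by (metis of_nat_mult of_nat_numeral)
  also have "\<dots> = int n * (int n - 1)" by (cases n) (auto simp: algebra_simps)
  finally show ?thesis .
qed

lemma V1_extend:
  assumes gY: "good Y" and p: "p \<in> VT" "p \<notin> Y" and k: "card {z\<in>Y. {p,z} \<in> E} \<ge> r - 2"
  shows "\<exists>Z. Z \<subseteq> VT \<and> Y \<inter> Z = {} \<and> Z \<noteq> {} \<and> card Z \<le> 2*r-4 \<and> pot r E (Y \<union> Z) \<ge> pot r E Y + 1"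
proof -
  let ?M = "{z\<in>Y. {p,z} \<in> E}"
  have YV: "Y \<subseteq> VT" using gY unfolding good_def by auto
  have fY: "finite Y" using YV finVT by (rule finite_subset)
  have fM: "finite ?M" using fY by auto
  have pM: "p \<notin> ?M" using p by auto
  have Mne: "?M \<noteq> {}"
  proof
    assume "?M = {}"
    then have "card ?M = 0" by (simp only: card.empty)
    then show False using k r5 by linarith
  qed
  let ?New1 = "(\<lambda>m. {p,m}) ` ?M"
  have New1_sub: "?New1 \<subseteq> E \<inter> edges_of (Y \<union> {p})"
    using tree_edges_pair p by (auto simp: pair_in_edges_of)
  have New1_disj: "?New1 \<inter> edges_of Y = {}" using p by (auto simp: pair_in_edges_of)
  have cNew1: "card ?New1 = card ?M" by (rule pair_image_card[OF fM pM])
  have att1: "card (comps E (Y \<union> {p})) + 0 \<le> card (comps E Y)"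
  proof -
    have "\<forall>z\<in>{p}. \<exists>y\<in>Y. {z,y} \<in> E" using Mne by auto
    then have "card (comps E (Y \<union> {p})) \<le> card (comps E Y)" by (rule comps_attach[OF fY])
    then show ?thesis by simp
  qed
  show ?thesis
  proof (cases "2 * card ?M \<ge> r + 2")
    case True
    have "pot r E (Y \<union> {p}) \<ge> pot r E Y + 2 * int (card ?New1) - int (r+1) * int (card {p}) + 2 * int 0"
      by (rule gain_lemma[OF fY _ _ New1_sub New1_disj att1]) (use p in auto)
    then have "pot r E (Y \<union> {p}) \<ge> pot r E Y + 1" using True cNew1 by simp
    then show ?thesis using p r5 by (intro exI[of _ "{p}"]) auto
  next
    case False
    then have r5': "r = 5" and k3: "card ?M = 3" using k r5 by auto
    show ?thesis
    proof (cases "\<exists>a\<in>?M. \<exists>c\<in>?M. a \<noteq> c \<and> {a,c} \<in> E")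
      case True
      then obtain a c where ac: "a \<in> ?M" "c \<in> ?M" "a \<noteq> c" "{a,c} \<in> E" by blast
      have "\<exists>B\<in>set Hs. {p,a,c} \<subseteq> B"
      proof (rule F1_clique[OF kr])
        show "{p,a,c} \<subseteq> VT" using p ac YV by auto
        show "\<forall>x\<in>{p,a,c}. \<forall>y\<in>{p,a,c}. x \<noteq> y \<longrightarrow> {x,y} \<in> E"
          using ac by (auto simp: insert_commute)
      qed simp
      then obtain B1 where B1: "B1 \<in> set Hs" "{p,a,c} \<subseteq> B1" by blast
      have fB1: "finite B1" "card B1 = 5" using blocks_card[OF kr B1(1)] r5' by auto
      have B1M: "B1 \<inter> Y \<subseteq> ?M"
      proof
        fix z assume z: "z \<in> B1 \<inter> Y"
        then have "z \<noteq> p" using p by auto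
        then have "{p,z} \<in> E" using blocks_edges[OF B1(1)] z B1(2) by (auto simp: pair_in_edges_of)
        then show "z \<in> ?M" using z by auto
      qed
      define j where "j = card (B1 \<inter> Y)"
      have j2: "j \<ge> 2"
      proof -
        have "{a,c} \<subseteq> B1 \<inter> Y" using ac B1 by auto
        then have "card {a,c} \<le> j" unfolding j_def using fB1 by (intro card_mono) auto
        then show ?thesis using ac(3) by simp
      qed
      have j3: "j \<le> 3" unfolding j_def using card_mono[OF fM B1M] k3 by simp
      let ?Z = "B1 - Y"
      have cZ: "card ?Z = 5 - j" unfolding j_def using fB1 by (simp add: card_Diff_subset_Int Int_commute)
      have MB: "card (?M - B1) = 3 - j"
      proof -
        have e: "?M \<inter> B1 = B1 \<inter> Y" using B1M by auto
        have "card (?M - B1) = card ?M - card (?M \<inter> B1)" by (rule card_Diff_subset_Int) (use fM in auto)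
        then show ?thesis unfolding j_def e using k3 by simp
      qed
      let ?New = "(edges_of B1 - edges_of (B1 \<inter> Y)) \<union> (\<lambda>m. {p,m}) ` (?M - B1)"
      have pB1: "p \<in> B1" using B1 by auto
      have New_sub: "?New \<subseteq> E \<inter> edges_of (Y \<union> ?Z)"
      proof -
        have "edges_of B1 \<subseteq> E \<inter> edges_of (Y \<union> ?Z)"
          using blocks_edges[OF B1(1)] edges_of_mono[of B1 "Y \<union> ?Z"] by auto
        moreover have "(\<lambda>m. {p,m}) ` (?M - B1) \<subseteq> E \<inter> edges_of (Y \<union> ?Z)"
          using pB1 p tree_edges_pair by (auto simp: pair_in_edges_of)
        ultimately show ?thesis by auto
      qed
      have New_disj: "?New \<inter> edges_of Y = {}"
        using p by (auto simp: edges_of_Int pair_in_edges_of)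
      have cNew: "card ?New = (10 - (j choose 2)) + (3 - j)"
      proof -
        have d: "(edges_of B1 - edges_of (B1 \<inter> Y)) \<inter> (\<lambda>m. {p,m}) ` (?M - B1) = {}"
          by (auto simp: pair_in_edges_of)
        have c1: "card (edges_of B1 - edges_of (B1 \<inter> Y)) = 10 - (j choose 2)"
        proof -
          have "edges_of (B1 \<inter> Y) \<subseteq> edges_of B1" by (rule edges_of_mono) auto
          then have "card (edges_of B1 - edges_of (B1 \<inter> Y)) = card (edges_of B1) - card (edges_of (B1 \<inter> Y))"
            using fB1 by (simp add: card_Diff_subset finite_edges_of)
          moreover have "(5::nat) choose 2 = 10" by (simp add: choose_two)
          ultimately show ?thesis using fB1 unfolding j_def by (simp add: card_edges_of)
        qed
        have c2: "card ((\<lambda>m. {p,m}) ` (?M - B1)) = 3 - j"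
          using pair_image_card[of "?M - B1" p] fM pM MB by auto
        show ?thesis using card_Un_disjoint[OF _ _ d] c1 c2 fB1 fM by (simp add: finite_edges_of)
      qed
      have att: "card (comps E (Y \<union> ?Z)) + 0 \<le> card (comps E Y)"
      proof -
        have "\<forall>z\<in>?Z. \<exists>y\<in>Y. {z,y} \<in> E"
        proof
          fix z assume z: "z \<in> ?Z"
          have "a \<in> Y" "a \<in> B1" using ac B1 by auto
          moreover have "z \<noteq> a" using z \<open>a \<in> Y\<close> by auto
          ultimately have "{z,a} \<in> E" using z blocks_edges[OF B1(1)] by (auto simp: pair_in_edges_of)
          then show "\<exists>y\<in>Y. {z,y} \<in> E" using \<open>a \<in> Y\<close> by auto
        qed
        then have "card (comps E (Y \<union> ?Z)) \<le> card (comps E Y)" by (rule comps_attach[OF fY])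
        then show ?thesis by simp
      qed
      have g: "pot r E (Y \<union> ?Z) \<ge> pot r E Y + 2 * int (card ?New) - int (r+1) * int (card ?Z) + 2 * int 0"
        by (rule gain_lemma[OF fY _ _ New_sub New_disj att]) (use fB1 in auto)
      have "j = 2 \<or> j = 3" using j2 j3 by auto
      then have "2 * int (card ?New) - int (r+1) * int (card ?Z) \<ge> 2"
        using cNew cZ r5' by (auto simp: numeral_2_eq_2 numeral_3_eq_3)
      then have "pot r E (Y \<union> ?Z) \<ge> pot r E Y + 1" using g by simp
      moreover have "?Z \<subseteq> VT" using blocks_sub[OF B1(1)] by auto
      moreover have "?Z \<noteq> {}" using pB1 p by auto
      moreover have "card ?Z \<le> 2*r-4" using cZ r5' by simp
      ultimately show ?thesis by (intro exI[of _ ?Z]) auto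
    next
      case False
      then have na: "\<forall>x\<in>?M. \<forall>y\<in>?M. x \<noteq> y \<longrightarrow> {x,y} \<notin> E" by blast
      obtain a where a: "a \<in> ?M" using Mne by blast
      have "card (?M - {a}) = 2" using k3 a fM by simp
      then have "?M - {a} \<noteq> {}" by (metis card.empty zero_neq_numeral)
      then obtain b where b: "b \<in> ?M - {a}" by blast
      have ab: "a \<in> ?M" "b \<in> ?M" "a \<noteq> b" using a b by auto
      have nconn: "\<not> conn E Y a b"
      proof
        assume cab: "conn E Y a b"
        have "{a,b} \<notin> E" using na[rule_format, OF ab] .
        then obtain s where s: "s \<in> Y" "{s,p} \<in> E" "{s,a} \<in> E \<or> {s,b} \<in> E"
          using separator[OF kr p(2) _ _ _ _ _ ab(3) cab] ab by auto
        have "{p,s} \<in> E" using s(2) by (simp add: insert_commute)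
        then have sM: "s \<in> ?M" using s(1) by simp
        show False
        proof (cases "{s,a} \<in> E")
          case True
          then have "s \<noteq> a" using tree_edges_pair[of s a Hs] by simp
          then show False using na[rule_format, OF sM ab(1)] True by simp
        next
          case False
          then have "{s,b} \<in> E" using s by auto
          moreover then have "s \<noteq> b" using tree_edges_pair[of s b Hs] by simp
          ultimately show False using na[rule_format, OF sM ab(2)] by simp
        qed
      qed
      have abY: "a \<in> Y" "b \<in> Y" "{p,a} \<in> E" "{p,b} \<in> E" using ab by auto
      have "card (comps E (insert p Y)) < card (comps E Y)"
        by (rule comps_merge[OF fY p(2) abY nconn])
      then have merge: "card (comps E (Y \<union> {p})) + 1 \<le> card (comps E Y)" by simp
      have "pot r E (Y \<union> {p}) \<ge> pot r E Y + 2 * int (card ?New1) - int (r+1) * int (card {p}) + 2 * int 1"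
        by (rule gain_lemma[OF fY _ _ New1_sub New1_disj merge]) (use p in auto)
      then have "pot r E (Y \<union> {p}) \<ge> pot r E Y + 1" using cNew1 k3 r5' by simp
      then show ?thesis using p r5 by (intro exI[of _ "{p}"]) auto
    qed
  qed
qed


lemma V3_arith:
  fixes j1 j2 :: nat
  assumes "1 \<le> j1" "j1 \<le> r - 2" "1 \<le> j2" "j2 \<le> r - 2"
  shows "2 * (int r * (int r - 1)) - 2 - int j1 * (int j1 - 1) - int j2 * (int j2 - 1)
         - (int r + 1) * (2 * int r - 2 - int j1 - int j2) \<ge> 2"
proof -
  have a1: "(int j1 - 1) * (int r + 1 - int j1) \<ge> 0" using assms r5 by (intro mult_nonneg_nonneg) auto
  have a2: "(int j2 - 1) * (int r + 1 - int j2) \<ge> 0" using assms r5 by (intro mult_nonneg_nonneg) auto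
  have "2 * (int r * (int r - 1)) - 2 - int j1 * (int j1 - 1) - int j2 * (int j2 - 1)
         - (int r + 1) * (2 * int r - 2 - int j1 - int j2)
        = 2 + (int j1 - 1) * (int r + 1 - int j1) + (int j2 - 1) * (int r + 1 - int j2)"
    by (simp add: algebra_simps)
  then show ?thesis using a1 a2 by simp
qed

lemma V3_extend:
  assumes gY: "good Y" and B: "B \<in> set Hs" "B' \<in> set Hs" "B \<noteq> B'" "a0 \<noteq> a1" "B \<inter> B' = {a0,a1}"
    "a0 \<notin> Y" "a1 \<notin> Y" "B \<inter> Y \<noteq> {}" "B' \<inter> Y \<noteq> {}"
  shows "\<exists>Z. Z \<subseteq> VT \<and> Y \<inter> Z = {} \<and> Z \<noteq> {} \<and> card Z \<le> 2*r-4 \<and> pot r E (Y \<union> Z) \<ge> pot r E Y + 1"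
proof -
  have YV: "Y \<subseteq> VT" using gY unfolding good_def by auto
  have fY: "finite Y" using YV finVT by (rule finite_subset)
  have fB: "finite B" "card B = r" "finite B'" "card B' = r" using blocks_card[OF kr B(1)] blocks_card[OF kr B(2)] by auto
  define j1 where "j1 = card (B \<inter> Y)"
  define j2 where "j2 = card (B' \<inter> Y)"
  have j1: "1 \<le> j1" "j1 \<le> r - 2"
  proof -
    show "1 \<le> j1" unfolding j1_def using B(8) fB by (simp add: Suc_leI card_gt_0_iff)
    have "B \<inter> Y \<subseteq> B - {a0,a1}" using B by auto
    then have "j1 \<le> card (B - {a0,a1})" unfolding j1_def using fB by (intro card_mono) auto
    moreover have "card (B - {a0,a1}) = r - 2" using fB B(4,5) by (subst card_Diff_subset) auto
    ultimately show "j1 \<le> r - 2" by simp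
  qed
  have j2: "1 \<le> j2" "j2 \<le> r - 2"
  proof -
    show "1 \<le> j2" unfolding j2_def using B(9) fB by (simp add: Suc_leI card_gt_0_iff)
    have "B' \<inter> Y \<subseteq> B' - {a0,a1}" using B by auto
    then have "j2 \<le> card (B' - {a0,a1})" unfolding j2_def using fB by (intro card_mono) auto
    moreover have "card (B' - {a0,a1}) = r - 2" using fB B(4,5) by (subst card_Diff_subset) auto
    ultimately show "j2 \<le> r - 2" by simp
  qed
  let ?Z = "(B \<union> B') - Y"
  have cBB: "card (B \<union> B') = 2 * r - 2"
  proof -
    have "card B + card B' = card (B \<union> B') + card (B \<inter> B')" using fB by (intro card_Un_Int) auto
    moreover have "card (B \<inter> B') = 2" using B(4,5) by simp
    ultimately show ?thesis using fB by simp
  qed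
  have cZ: "card ?Z = 2 * r - 2 - (j1 + j2)"
  proof -
    have "(B \<union> B') \<inter> Y = (B \<inter> Y) \<union> (B' \<inter> Y)" by auto
    moreover have "(B \<inter> Y) \<inter> (B' \<inter> Y) = {}"
    proof -
      have "(B \<inter> Y) \<inter> (B' \<inter> Y) = (B \<inter> B') \<inter> Y" by blast
      also have "\<dots> = {a0,a1} \<inter> Y" using B(5) by simp
      also have "\<dots> = {}" using B(6,7) by blast
      finally show ?thesis .
    qed
    moreover have "card ((B \<inter> Y) \<union> (B' \<inter> Y)) = card (B \<inter> Y) + card (B' \<inter> Y)"
      using card_Un_disjoint[of "B \<inter> Y" "B' \<inter> Y"] fB calculation(2) by auto
    ultimately have "card ((B \<union> B') \<inter> Y) = j1 + j2" unfolding j1_def j2_def by simp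
    moreover have "card ?Z = card (B \<union> B') - card ((B \<union> B') \<inter> Y)"
      by (rule card_Diff_subset_Int) (use fB in auto)
    ultimately show ?thesis using cBB by simp
  qed
  let ?EE = "edges_of B \<union> edges_of B'"
  let ?New = "?EE - edges_of Y"
  have fEE: "finite ?EE" using fB by (simp add: finite_edges_of)
  have cEE: "card ?EE = 2 * (r choose 2) - 1"
  proof -
    have "edges_of B \<inter> edges_of B' = {{a0,a1}}" using B(4,5) by (simp add: edges_of_Int[symmetric] edges_of_pair)
    moreover have "card (edges_of B) + card (edges_of B') = card ?EE + card (edges_of B \<inter> edges_of B')"
      using fB by (intro card_Un_Int) (auto simp: finite_edges_of)
    ultimately show ?thesis using fB by (simp add: card_edges_of)
  qed
  have iNew: "int (card ?New) \<ge> int (card ?EE) - int (j1 choose 2) - int (j2 choose 2)"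
  proof -
    have "?EE \<inter> edges_of Y = edges_of (B \<inter> Y) \<union> edges_of (B' \<inter> Y)" by (auto simp: edges_of_Int)
    then have "card (?EE \<inter> edges_of Y) \<le> (j1 choose 2) + (j2 choose 2)"
      using card_Un_le[of "edges_of (B \<inter> Y)" "edges_of (B' \<inter> Y)"] fB
      unfolding j1_def j2_def by (simp add: card_edges_of)
    moreover have "card ?New = card ?EE - card (?EE \<inter> edges_of Y)"
      by (rule card_Diff_subset_Int) (use fEE in auto)
    moreover have "card (?EE \<inter> edges_of Y) \<le> card ?EE" using fEE by (intro card_mono) auto
    ultimately show ?thesis by linarith
  qed
  have New_sub: "?New \<subseteq> E \<inter> edges_of (Y \<union> ?Z)"
    using blocks_edges[OF B(1)] blocks_edges[OF B(2)] edges_of_mono[of B "Y \<union> ?Z"] edges_of_mono[of B' "Y \<union> ?Z"]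
    by auto
  have New_disj: "?New \<inter> edges_of Y = {}" by auto
  have att: "card (comps E (Y \<union> ?Z)) + 0 \<le> card (comps E Y)"
  proof -
    obtain k where k: "k \<in> B" "k \<in> Y" using B(8) by auto
    obtain q where q: "q \<in> B'" "q \<in> Y" using B(9) by auto
    have "\<forall>z\<in>?Z. \<exists>y\<in>Y. {z,y} \<in> E"
    proof
      fix z assume z: "z \<in> ?Z"
      show "\<exists>y\<in>Y. {z,y} \<in> E"
      proof (cases "z \<in> B")
        case True
        then have "{z,k} \<in> E" using k z blocks_edges[OF B(1)] by (auto simp: pair_in_edges_of)
        then show ?thesis using k by auto
      next
        case False
        then have "z \<in> B'" using z by auto
        then have "{z,q} \<in> E" using q z blocks_edges[OF B(2)] by (auto simp: pair_in_edges_of)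
        then show ?thesis using q by auto
      qed
    qed
    then have "card (comps E (Y \<union> ?Z)) \<le> card (comps E Y)" by (rule comps_attach[OF fY])
    then show ?thesis by simp
  qed
  have g: "pot r E (Y \<union> ?Z) \<ge> pot r E Y + 2 * int (card ?New) - int (r+1) * int (card ?Z) + 2 * int 0"
    by (rule gain_lemma[OF fY _ _ New_sub New_disj att]) (use fB in auto)
  have rr: "2 * int (r choose 2) = int r * (int r - 1)" by (rule two_choose_int)
  have jj1: "2 * int (j1 choose 2) = int j1 * (int j1 - 1)" by (rule two_choose_int)
  have jj2: "2 * int (j2 choose 2) = int j2 * (int j2 - 1)" by (rule two_choose_int)
  have ar: "2 * (int r * (int r - 1)) - 2 - int j1 * (int j1 - 1) - int j2 * (int j2 - 1)
         - (int r + 1) * (2 * int r - 2 - int j1 - int j2) \<ge> 2"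
    by (rule V3_arith[OF j1 j2])
  have iEE: "2 * int (card ?EE) = 2 * (2 * int (r choose 2)) - 2"
  proof -
    have "r * (r - 1) \<ge> 1 * 1" using r5 by (intro mult_le_mono) auto
    then have "2 * (r choose 2) \<ge> 1" using two_choose[of r] by simp
    then show ?thesis using cEE by linarith
  qed
  have iZ: "int (card ?Z) = 2 * int r - 2 - int j1 - int j2" using cZ j1 j2 r5 by simp
  have "2 * int (card ?New) - int (r+1) * int (card ?Z) \<ge> 2"
  proof -
    have "2 * int (card ?New) \<ge> 2 * (2 * int (r choose 2)) - 2 - 2 * int (j1 choose 2) - 2 * int (j2 choose 2)"
      using iNew iEE by linarith
    then have "2 * int (card ?New) \<ge> 2 * (int r * (int r - 1)) - 2 - int j1 * (int j1 - 1) - int j2 * (int j2 - 1)"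
      using rr jj1 jj2 by linarith
    moreover have "int (r+1) * int (card ?Z) = (int r + 1) * (2 * int r - 2 - int j1 - int j2)"
      using iZ by simp
    ultimately show ?thesis using ar by linarith
  qed
  then have "pot r E (Y \<union> ?Z) \<ge> pot r E Y + 1" using g by simp
  moreover have "?Z \<subseteq> VT" using blocks_sub[OF B(1)] blocks_sub[OF B(2)] by auto
  moreover have "?Z \<noteq> {}" using B by auto
  moreover have "card ?Z \<le> 2*r-4" using cZ j1 j2 by simp
  ultimately show ?thesis by (intro exI[of _ ?Z]) auto
qed


lemma closure_K:
  "\<exists>K. X \<subseteq> K \<and> K \<subseteq> VT \<and> card K \<le> (1 + (2*r-4)*(r+3)) * card X \<and>
     (\<forall>p \<in> VT - K. card {z \<in> K. {p,z} \<in> E} < r - 2) \<and>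
     (\<forall>B\<in>set Hs. \<forall>B'\<in>set Hs. \<forall>a0 a1. B \<noteq> B' \<and> a0 \<noteq> a1 \<and> B \<inter> B' = {a0,a1} \<and> a0 \<notin> K \<and> a1 \<notin> K
        \<longrightarrow> B \<inter> K = {} \<or> B' \<inter> K = {})"
proof -
  obtain K where gK: "good K" and mx: "\<forall>Y. good Y \<longrightarrow> card Y \<le> card K" using exists_max_good by blast
  have KV: "X \<subseteq> K" "K \<subseteq> VT" using gK unfolding good_def by auto
  have fK: "finite K" using KV(2) finVT by (rule finite_subset)
  have fX: "finite X" using XV finVT by (rule finite_subset)
  have noext: False if "Z \<subseteq> VT" "K \<inter> Z = {}" "Z \<noteq> {}" "card Z \<le> 2*r-4" "pot r E (K \<union> Z) \<ge> pot r E K + 1" for Z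
    using extend_good[OF gK that] mx by force
  have c1: "\<forall>p \<in> VT - K. card {z \<in> K. {p,z} \<in> E} < r - 2"
  proof (rule ballI, rule ccontr)
    fix p assume p: "p \<in> VT - K" and "\<not> card {z \<in> K. {p,z} \<in> E} < r - 2"
    then have "card {z \<in> K. {p,z} \<in> E} \<ge> r - 2" by simp
    then show False using V1_extend[OF gK _ _ ] p noext by blast
  qed
  have c2: "\<forall>B\<in>set Hs. \<forall>B'\<in>set Hs. \<forall>a0 a1. B \<noteq> B' \<and> a0 \<noteq> a1 \<and> B \<inter> B' = {a0,a1} \<and> a0 \<notin> K \<and> a1 \<notin> K
        \<longrightarrow> B \<inter> K = {} \<or> B' \<inter> K = {}"
  proof (intro ballI allI impI, rule ccontr)
    fix B B' a0 a1 assume B: "B \<in> set Hs" "B' \<in> set Hs"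
      and h: "B \<noteq> B' \<and> a0 \<noteq> a1 \<and> B \<inter> B' = {a0,a1} \<and> a0 \<notin> K \<and> a1 \<notin> K"
      and n: "\<not> (B \<inter> K = {} \<or> B' \<inter> K = {})"
    show False using V3_extend[OF gK B(1,2)] h n noext by blast
  qed
  have potK: "pot r E K \<le> 0"
  proof -
    have "2 * ecount E K \<le> (r+1) * card K" unfolding ecount_def by (rule density[OF kr fK])
    then have "2 * int (ecount E K) \<le> int (r+1) * int (card K)" by (metis of_nat_le_iff of_nat_mult of_nat_numeral)
    then show ?thesis unfolding pot_def by simp
  qed
  have potX: "pot r E X \<ge> - (int (r+1) * int (card X)) - 2 * int (card X)"
  proof -
    have "card (comps E X) \<le> card X" by (rule comps_card_le[OF fX])
    then show ?thesis unfolding pot_def by simp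
  qed
  have "int (card K) - int (card X) \<le> int (2*r-4) * (pot r E K - pot r E X)"
    using gK unfolding good_def by simp
  also have "\<dots> \<le> int (2*r-4) * (int (r+3) * int (card X))"
  proof (rule mult_left_mono)
    show "pot r E K - pot r E X \<le> int (r+3) * int (card X)" using potK potX by (simp add: algebra_simps)
  qed simp
  finally have i1: "int (card K) \<le> int (card X) + int (2*r-4) * (int (r+3) * int (card X))" by simp
  have "int ((1 + (2*r-4)*(r+3)) * card X) = int (card X) + int (2*r-4) * (int (r+3) * int (card X))"
    by (simp only: of_nat_mult of_nat_add of_nat_1 distrib_right mult_1_left mult.assoc)
  then have "int (card K) \<le> int ((1 + (2*r-4)*(r+3)) * card X)" using i1 by simp
  then have "card K \<le> (1 + (2*r-4)*(r+3)) * card X" by (simp only: of_nat_le_iff)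
  then show ?thesis using KV c1 c2 by blast
qed

end

context
  fixes r :: nat and Hs :: "'a set list" and VG :: "'a set" and EG :: "'a set set" and K :: "'a set"
  assumes kr: "Kr_tree_seq r Hs" and r5: "r \<ge> 5" and gr: "graph VG EG"
    and XK: "tree_vertices Hs \<inter> VG \<subseteq> K" and KV: "K \<subseteq> tree_vertices Hs"
    and c1: "\<forall>p \<in> tree_vertices Hs - K. card {z \<in> K. {p,z} \<in> tree_edges Hs} < r - 2"
    and c2: "\<forall>B\<in>set Hs. \<forall>B'\<in>set Hs. \<forall>a0 a1. B \<noteq> B' \<and> a0 \<noteq> a1 \<and> B \<inter> B' = {a0,a1} \<and> a0 \<notin> K \<and> a1 \<notin> K
        \<longrightarrow> B \<inter> K = {} \<or> B' \<inter> K = {}"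
begin

abbreviation "TE \<equiv> tree_edges Hs"
abbreviation "TV \<equiv> tree_vertices Hs"
abbreviation "WW \<equiv> VG \<union> K"
abbreviation "LL \<equiv> TE \<union> edges_of WW"

lemma finK: "finite K" using KV finite_tree_vertices[OF kr] by (rule finite_subset)

lemma VT_W: "TV \<inter> WW \<subseteq> K" using XK by auto

lemma c1': "p \<in> TV \<Longrightarrow> p \<notin> K \<Longrightarrow> Q \<subseteq> K \<Longrightarrow> (\<forall>z\<in>Q. {p,z} \<in> TE) \<Longrightarrow> card Q < r - 2"
proof -
  assume a: "p \<in> TV" "p \<notin> K" "Q \<subseteq> K" "\<forall>z\<in>Q. {p,z} \<in> TE"
  have "Q \<subseteq> {z \<in> K. {p,z} \<in> TE}" using a by auto
  then have "card Q \<le> card {z \<in> K. {p,z} \<in> TE}" using finK by (intro card_mono) auto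
  moreover have "card {z \<in> K. {p,z} \<in> TE} < r - 2" using c1 a(1,2) by blast
  ultimately show ?thesis by linarith
qed

lemma L_nonW: "x \<notin> WW \<Longrightarrow> {x,y} \<in> LL \<Longrightarrow> {x,y} \<in> TE"
  unfolding edges_of_def by auto

lemma L_closed_side:
  assumes S: "S \<subseteq> VG \<union> TV" "card S = r" and pq: "p \<in> S" "q \<in> S" "p \<noteq> q"
    and oth: "\<forall>f\<in>edges_of S. f \<noteq> {p,q} \<longrightarrow> f \<in> LL"
    and notL: "{p,q} \<notin> LL" and pW: "p \<notin> WW"
  shows False
proof -
  have fS: "finite S" using S(2) r5 by (metis card.infinite not_numeral_le_zero)
  have pV: "p \<in> TV" using S(1) pq(1) pW by auto
  have pK: "p \<notin> K" using pW by auto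
  have edgeL: "{x,y} \<in> LL" if xy: "x \<in> S" "y \<in> S" "x \<noteq> y" "{x,y} \<noteq> {p,q}" for x y
  proof -
    have "{x,y} \<in> edges_of S" using xy by (simp add: pair_in_edges_of)
    then show ?thesis using oth[rule_format, OF _ xy(4)] by simp
  qed
  define A where "A = S - {p,q}"
  have cA: "card A = r - 2" unfolding A_def using fS pq S(2) by (subst card_Diff_subset) auto
  have fA: "finite A" unfolding A_def using fS by auto
  have ApE: "{p,a} \<in> TE" if "a \<in> A" for a
  proof -
    have "{p,a} \<in> LL" using that pq unfolding A_def by (intro edgeL) (auto simp: doubleton_eq_iff)
    then show ?thesis using L_nonW[OF pW] by blast
  qed
  have AV: "A \<subseteq> TV"
  proof
    fix a assume "a \<in> A"
    then show "a \<in> TV" using ApE tree_edges_pair[of p a Hs] by simp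
  qed
  have pqE: "{p,q} \<notin> TE" using notL by auto
  show False
  proof (cases "A \<subseteq> WW")
    case True
    then have "A \<subseteq> K" using AV VT_W by blast
    then have "card A < r - 2" using c1'[OF pV pK] ApE by blast
    then show False using cA by simp
  next
    case False
    then obtain a0 where a0: "a0 \<in> A" "a0 \<notin> WW" by blast
    have a0S: "a0 \<in> S" "a0 \<noteq> p" "a0 \<noteq> q" using a0 unfolding A_def by auto
    have a0E: "{a0,y} \<in> TE" if "y \<in> S" "y \<noteq> a0" for y
    proof -
      have "{a0,y} \<noteq> {p,q}" using a0S by (auto simp: doubleton_eq_iff)
      then have "{a0,y} \<in> LL" using that a0S by (intro edgeL) auto
      then show ?thesis using L_nonW[OF a0(2)] by blast
    qed
    have qV: "q \<in> TV" using a0E[OF pq(2)] a0S tree_edges_pair[of a0 q Hs] by simp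
    let ?CN = "{z. {p,z} \<in> TE \<and> {q,z} \<in> TE}"
    have cCN: "card ?CN \<le> 2" by (rule F3_common[OF kr pq(3) pqE])
    have fCN: "finite ?CN"
    proof (rule finite_subset[OF _ finite_tree_vertices[OF kr]])
      show "?CN \<subseteq> TV" using tree_edges_pair[of p _ Hs] by blast
    qed
    have AW_CN: "A - WW \<subseteq> ?CN"
    proof
      fix a assume a: "a \<in> A - WW"
      have "{a,q} \<noteq> {p,q}" using a unfolding A_def by (auto simp: doubleton_eq_iff)
      then have "{a,q} \<in> LL" using a pq unfolding A_def by (intro edgeL) auto
      then have "{a,q} \<in> TE" using L_nonW a by blast
      then show "a \<in> ?CN" using ApE a by (auto simp: insert_commute)
    qed
    have qW: "q \<in> WW"
    proof (rule ccontr)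
      assume qW: "q \<notin> WW"
      have "A \<subseteq> ?CN"
      proof
        fix a assume a: "a \<in> A"
        have "{a,q} \<noteq> {p,q}" using a unfolding A_def by (auto simp: doubleton_eq_iff)
        then have "{a,q} \<in> LL" using a pq unfolding A_def by (intro edgeL) auto
        then have "{q,a} \<in> TE" using L_nonW[OF qW] by (simp add: insert_commute)
        then show "a \<in> ?CN" using ApE a by auto
      qed
      then have "card A \<le> 2" using cCN card_mono[OF fCN] by (meson le_trans)
      then show False using cA r5 by simp
    qed
    then have qK: "q \<in> K" using qV VT_W by blast
    have AWK: "A \<inter> WW \<subseteq> K" using AV VT_W by blast
    have cAW: "card (A - WW) \<le> 2" using AW_CN cCN card_mono[OF fCN] by (meson le_trans)
    have cAW1: "card (A - WW) \<ge> 1"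
    proof -
      have "a0 \<in> A - WW" using a0 by blast
      then have "A - WW \<noteq> {}" by blast
      then show ?thesis using fA by (simp add: Suc_leI card_gt_0_iff)
    qed
    have cAsplit: "card (A \<inter> WW) + card (A - WW) = r - 2"
      using cA fA by (metis card_Int_Diff)
    have qA: "q \<notin> A" unfolding A_def by auto
    show False
    proof (cases "card (A - WW) = 1")
      case True
      have Q: "insert q (A \<inter> WW) \<subseteq> K" using qK AWK by auto
      have QE: "\<forall>z\<in>insert q (A \<inter> WW). {a0,z} \<in> TE"
      proof
        fix z assume z: "z \<in> insert q (A \<inter> WW)"
        then have "z \<in> S" "z \<noteq> a0" using pq a0 unfolding A_def by auto
        then show "{a0,z} \<in> TE" by (rule a0E)
      qed
      have a0V: "a0 \<in> TV" using a0 AV by auto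
      have "card (insert q (A \<inter> WW)) < r - 2" using c1'[OF a0V _ Q QE] a0 by auto
      moreover have "card (insert q (A \<inter> WW)) = card (A \<inter> WW) + 1" using qA fA by simp
      ultimately show False using cAsplit True by simp
    next
      case False
      then have two: "card (A - WW) = 2" using cAW cAW1 by simp
      then obtain a1 where a1: "a1 \<in> A - WW" "a1 \<noteq> a0"
      proof -
        have "card (A - WW - {a0}) = 1" using two a0 fA by simp
        then obtain x where "x \<in> A - WW - {a0}" by (metis card.empty ex_in_conv zero_neq_one)
        then show ?thesis using that by auto
      qed
      have a1S: "a1 \<in> S" "a1 \<noteq> p" "a1 \<noteq> q" using a1 unfolding A_def by auto
      have a1E: "{a1,y} \<in> TE" if "y \<in> S" "y \<noteq> a1" for y
      proof -
        have "{a1,y} \<noteq> {p,q}" using a1S by (auto simp: doubleton_eq_iff)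
        then have "{a1,y} \<in> LL" using that a1S by (intro edgeL) auto
        then show ?thesis using L_nonW a1 by blast
      qed
      have AWne: "A \<inter> WW \<noteq> {}"
      proof
        assume "A \<inter> WW = {}"
        then have "card (A \<inter> WW) = 0" by (simp only: card.empty)
        then show False using cAsplit two r5 by simp
      qed
      then obtain k0 where k0: "k0 \<in> A \<inter> WW" by blast
      have blockk: "\<exists>B\<in>set Hs. {p,a0,a1,k} \<subseteq> B" if k: "k \<in> A \<inter> WW" for k
      proof (rule F1_clique[OF kr])
        have kS: "k \<in> S" "k \<noteq> a0" "k \<noteq> a1" "k \<noteq> p" using k a0 a1 unfolding A_def by auto
        show "{p,a0,a1,k} \<subseteq> TV" using pV AV a0 a1 k by auto
        show "\<forall>x\<in>{p,a0,a1,k}. \<forall>y\<in>{p,a0,a1,k}. x \<noteq> y \<longrightarrow> {x,y} \<in> TE"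
        proof -
          have e1: "{p,a0} \<in> TE" "{p,a1} \<in> TE" "{p,k} \<in> TE" using ApE a0 a1 k by auto
          have e2: "{a0,a1} \<in> TE" "{a0,k} \<in> TE" using a0E[OF a1S(1)] a1(2) a0E[OF kS(1,2)] by auto
          have e3: "{a1,k} \<in> TE" using a1E kS by auto
          show ?thesis using e1 e2 e3 by (auto simp: insert_commute)
        qed
      qed simp
      obtain B where B: "B \<in> set Hs" "{p,a0,a1,k0} \<subseteq> B" using blockk[OF k0] by blast
      have distinct: "p \<noteq> a0" "p \<noteq> a1" "a0 \<noteq> a1" using a0S a1S a1 by auto
      have AWB: "A \<inter> WW \<subseteq> B"
      proof
        fix k assume k: "k \<in> A \<inter> WW"
        obtain Bk where Bk: "Bk \<in> set Hs" "{p,a0,a1,k} \<subseteq> Bk" using blockk[OF k] by blast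
        have "Bk = B" by (rule F4_eq[OF kr Bk(1) B(1), of p a0 a1]) (use Bk B distinct in auto)
        then show "k \<in> B" using Bk by auto
      qed
      have "\<exists>B'\<in>set Hs. {q,a0,a1} \<subseteq> B'"
      proof (rule F1_clique[OF kr])
        show "{q,a0,a1} \<subseteq> TV" using qV AV a0 a1 by auto
        have e: "{a0,q} \<in> TE" "{a1,q} \<in> TE" "{a0,a1} \<in> TE"
          using a0E[OF pq(2)] a1E[OF pq(2)] a0S a1S a0E[OF a1S(1)] a1(2) by auto
        show "\<forall>x\<in>{q,a0,a1}. \<forall>y\<in>{q,a0,a1}. x \<noteq> y \<longrightarrow> {x,y} \<in> TE"
          using e by (auto simp: insert_commute)
      qed simp
      then obtain B' where B': "B' \<in> set Hs" "{q,a0,a1} \<subseteq> B'" by blast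
      have qB: "q \<notin> B"
      proof
        assume "q \<in> B"
        then have "{p,q} \<in> TE" using B blocks_edges[OF B(1)] pq(3) by (auto simp: pair_in_edges_of)
        then show False using pqE by simp
      qed
      have BB: "B \<noteq> B'" using qB B' by auto
      have BiB: "B \<inter> B' = {a0,a1}"
      proof -
        have sub: "{a0,a1} \<subseteq> B \<inter> B'" using B B' by auto
        have "card (B \<inter> B') \<le> 2" by (rule F4_blocks[OF kr B(1) B'(1) BB])
        moreover have "card {a0,a1} = 2" using distinct by simp
        moreover have "finite (B \<inter> B')" using blocks_card[OF kr B(1)] by auto
        ultimately show ?thesis using sub by (metis card_seteq)
      qed
      have "a0 \<notin> K" "a1 \<notin> K" using a0 a1 by auto
      then have "B \<inter> K = {} \<or> B' \<inter> K = {}" using c2 B(1) B'(1) BB distinct BiB by blast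
      moreover have "k0 \<in> B \<inter> K" using k0 AWB AWK by auto
      moreover have "q \<in> B' \<inter> K" using qK B' by auto
      ultimately show False by auto
    qed
  qed
qed

lemma L_closed:
  assumes S: "S \<subseteq> VG \<union> TV" "card S = r" and e: "e \<in> edges_of S"
    and oth: "\<forall>f\<in>edges_of S. f \<noteq> e \<longrightarrow> f \<in> LL"
  shows "e \<in> LL"
proof (rule ccontr)
  assume notL: "e \<notin> LL"
  obtain p q where pq: "p \<noteq> q" "e = {p,q}" "p \<in> S" "q \<in> S" using edges_of_E[OF e] by blast
  have "p \<notin> WW \<or> q \<notin> WW" using notL pq by (auto simp: pair_in_edges_of)
  then show False
  proof
    assume "p \<notin> WW"
    then show False using L_closed_side[OF S pq(3,4,1)] oth notL pq(2) by blast
  next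
    assume "q \<notin> WW"
    moreover have "{q,p} = e" using pq by auto
    ultimately show False using L_closed_side[OF S pq(4,3) pq(1)[symmetric]] oth notL by blast
  qed
qed


lemma reach_sub:
  assumes "(dyn_step r (VG \<union> TV))\<^sup>*\<^sup>* F0 F" "F0 \<subseteq> LL"
  shows "F0 \<subseteq> F \<and> F \<subseteq> LL"
  using assms(1)
proof (induction rule: rtranclp_induct)
  case base
  then show ?case using assms(2) by simp
next
  case (step F F')
  obtain S e where Se: "S \<subseteq> VG \<union> TV" "card S = r" "e \<in> edges_of S" "e \<notin> F"
    "\<forall>f\<in>edges_of S. f \<noteq> e \<longrightarrow> f \<in> F" "F' = insert e F"
    using step.hyps(2) unfolding dyn_step_def by blast
  have "\<forall>f\<in>edges_of S. f \<noteq> e \<longrightarrow> f \<in> LL" using Se(5) step.IH by blast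
  then have "e \<in> LL" by (rule L_closed[OF Se(1,2,3)])
  then show ?case using step.IH Se(6) by blast
qed

lemma init_sub: "EG \<union> TE \<subseteq> LL"
  using gr unfolding graph_def edges_of_def by auto

lemma completed_sub:
  assumes cc: "completed_copy r (VG \<union> TV) (EG \<union> TE) S" and e': "e' \<in> TE" "e' \<subseteq> S"
  shows "e' \<subseteq> K"
proof -
  obtain F e where S: "S \<subseteq> VG \<union> TV" "card S = r" and F: "(dyn_step r (VG \<union> TV))\<^sup>*\<^sup>* (EG \<union> TE) F"
    and e: "e \<in> edges_of S" "e \<notin> F" and oth: "\<forall>f\<in>edges_of S. f \<noteq> e \<longrightarrow> f \<in> F"
    using cc unfolding completed_copy_def by blast
  have FL: "EG \<union> TE \<subseteq> F" "F \<subseteq> LL" using reach_sub[OF F init_sub] by auto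
  have othL: "\<forall>f\<in>edges_of S. f \<noteq> e \<longrightarrow> f \<in> LL" using oth FL by blast
  have eL: "e \<in> LL" by (rule L_closed[OF S e(1) othL])
  have eT: "e \<notin> TE" using e(2) FL by blast
  obtain e1 e2 where ee: "e1 \<noteq> e2" "e = {e1,e2}" "e1 \<in> S" "e2 \<in> S" using edges_of_E[OF e(1)] by blast
  have eW: "e1 \<in> WW" "e2 \<in> WW" using eL eT ee(2) by (auto simp: pair_in_edges_of)
  have fS: "finite S" using S(2) r5 by (metis card.infinite not_numeral_le_zero)
  have allL: "{x,y} \<in> LL" if "x \<in> S" "y \<in> S" "x \<noteq> y" for x y
  proof (cases "{x,y} = e")
    case True then show ?thesis using eL by simp
  next
    case False
    have "{x,y} \<in> edges_of S" using that by (simp add: pair_in_edges_of)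
    then show ?thesis using othL[rule_format, OF _ False] by simp
  qed
  have STK: "S \<inter> TV \<subseteq> K"
  proof
    fix y assume y: "y \<in> S \<inter> TV"
    show "y \<in> K"
    proof (rule ccontr)
      assume yK: "y \<notin> K"
      have yW: "y \<notin> WW" using y yK XK by auto
      have ye: "{y,z} \<in> TE" if "z \<in> S" "z \<noteq> y" for z
        using allL[OF _ that(1)] y that(2) L_nonW[OF yW] by auto
      have ey: "e1 \<noteq> y" "e2 \<noteq> y" using eW yW by auto
      have e12K: "e1 \<in> K" "e2 \<in> K"
        using ye[OF ee(3) ey(1)] ye[OF ee(4) ey(2)] tree_edges_pair[of y e1 Hs] tree_edges_pair[of y e2 Hs] eW VT_W
        by auto
      have eT': "{e1,e2} \<notin> TE" using eT ee(2) by simp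
      let ?CN = "{z. {e1,z} \<in> TE \<and> {e2,z} \<in> TE}"
      have cCN: "card ?CN \<le> 2" by (rule F3_common[OF kr ee(1) eT'])
      have fCN: "finite ?CN"
      proof (rule finite_subset[OF _ finite_tree_vertices[OF kr]])
        show "?CN \<subseteq> TV" using tree_edges_pair[of e1 _ Hs] by blast
      qed
      define R where "R = S - {e1,e2}"
      have fR: "finite R" unfolding R_def using fS by auto
      have cR: "card R = r - 2" unfolding R_def using fS ee S(2) by (subst card_Diff_subset) auto
      have RW: "R - WW \<subseteq> ?CN"
      proof
        fix z assume z: "z \<in> R - WW"
        have zS: "z \<in> S" "z \<noteq> e1" "z \<noteq> e2" "z \<notin> WW" using z unfolding R_def by auto
        have "{z,e1} \<in> TE" "{z,e2} \<in> TE"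
          using allL[OF zS(1) ee(3)] allL[OF zS(1) ee(4)] zS L_nonW[OF zS(4)] by auto
        then show "z \<in> ?CN" by (simp add: insert_commute)
      qed
      have cRW: "card (R - WW) \<le> 2" using RW cCN card_mono[OF fCN] by (meson le_trans)
      have split: "card (R \<inter> WW) + card (R - WW) = r - 2" using cR fR by (metis card_Int_Diff)
      let ?Q = "{e1,e2} \<union> (R \<inter> WW)"
      have QK: "?Q \<subseteq> K"
      proof -
        have "R \<inter> WW \<subseteq> K"
        proof
          fix z assume z: "z \<in> R \<inter> WW"
          then have "z \<noteq> y" using yW by auto
          then have "{y,z} \<in> TE" using ye z unfolding R_def by auto
          then have "z \<in> TV" using tree_edges_pair[of y z Hs] by simp
          then show "z \<in> K" using z VT_W by auto
        qed
        then show ?thesis using e12K by auto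
      qed
      have QE: "\<forall>z\<in>?Q. {y,z} \<in> TE"
      proof
        fix z assume z: "z \<in> ?Q"
        then have "z \<in> S" "z \<noteq> y" using ee yW ey unfolding R_def by auto
        then show "{y,z} \<in> TE" by (rule ye)
      qed
      have "card ?Q < r - 2" using c1'[OF _ yK QK QE] y by auto
      moreover have "card ?Q = 2 + card (R \<inter> WW)"
      proof -
        have "{e1,e2} \<inter> (R \<inter> WW) = {}" unfolding R_def by auto
        then have "card ?Q = card {e1,e2} + card (R \<inter> WW)" using fR by (intro card_Un_disjoint) auto
        then show ?thesis using ee(1) by simp
      qed
      ultimately show False using split cRW by linarith
    qed
  qed
  have "e' \<subseteq> TV" using e' tree_edges_sub by blast
  then show ?thesis using STK e' by blast
qed

lemma count_bound:
  "card {e \<in> TE. \<exists>S. completed_copy r (VG \<union> TV) (EG \<union> TE) S \<and> e \<subseteq> S} \<le> (r+1) * card K"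
proof -
  let ?Es = "{e \<in> TE. \<exists>S. completed_copy r (VG \<union> TV) (EG \<union> TE) S \<and> e \<subseteq> S}"
  have sub: "?Es \<subseteq> TE \<inter> edges_of K"
  proof
    fix e assume e: "e \<in> ?Es"
    then have "e \<subseteq> K" using completed_sub by blast
    moreover have "card e = 2" using e tree_edges_sub by blast
    ultimately show "e \<in> TE \<inter> edges_of K" using e unfolding edges_of_def by blast
  qed
  have "card ?Es \<le> card (TE \<inter> edges_of K)" using sub finK by (intro card_mono) (auto simp: finite_edges_of)
  moreover have "2 * card (TE \<inter> edges_of K) \<le> (r+1) * card K" by (rule density[OF kr finK])
  ultimately show ?thesis by linarith
qed

end

theorem lemma6p7:
  fixes r :: nat
  assumes "r \<ge> 5"
  shows "\<exists>C::real. \<forall>(Hs :: nat set list) (VG :: nat set) (EG :: nat set set).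
           Kr_tree_seq r Hs \<longrightarrow> graph VG EG \<longrightarrow>
           real (card {e \<in> tree_edges Hs.
                   \<exists>S. completed_copy r (VG \<union> tree_vertices Hs) (EG \<union> tree_edges Hs) S
                       \<and> e \<subseteq> S})
             \<le> C * real (card (tree_vertices Hs \<inter> VG))"
proof (rule exI[of _ "real ((r+1) * (1 + (2*r-4)*(r+3)))"], intro allI impI)
  fix Hs :: "nat set list" and VG :: "nat set" and EG :: "nat set set"
  assume kr: "Kr_tree_seq r Hs" and gr: "graph VG EG"
  let ?X = "tree_vertices Hs \<inter> VG"
  interpret kr_setting r Hs ?X
    by unfold_locales (use kr assms in auto)
  obtain K where K: "?X \<subseteq> K" "K \<subseteq> tree_vertices Hs"
    "card K \<le> (1 + (2*r-4)*(r+3)) * card ?X"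
    "\<forall>p \<in> tree_vertices Hs - K. card {z \<in> K. {p,z} \<in> tree_edges Hs} < r - 2"
    "\<forall>B\<in>set Hs. \<forall>B'\<in>set Hs. \<forall>a0 a1. B \<noteq> B' \<and> a0 \<noteq> a1 \<and> B \<inter> B' = {a0,a1} \<and> a0 \<notin> K \<and> a1 \<notin> K
        \<longrightarrow> B \<inter> K = {} \<or> B' \<inter> K = {}"
    using closure_K by auto
  have cb: "card {e \<in> tree_edges Hs. \<exists>S. completed_copy r (VG \<union> tree_vertices Hs) (EG \<union> tree_edges Hs) S \<and> e \<subseteq> S}
      \<le> (r+1) * card K"
    by (rule count_bound[OF kr assms gr K(1) K(2) K(4) K(5)])
  also have "\<dots> \<le> (r+1) * ((1 + (2*r-4)*(r+3)) * card ?X)"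
    using K(3) by (rule mult_le_mono2)
  finally have "real (card {e \<in> tree_edges Hs. \<exists>S. completed_copy r (VG \<union> tree_vertices Hs) (EG \<union> tree_edges Hs) S \<and> e \<subseteq> S})
      \<le> real ((r+1) * ((1 + (2*r-4)*(r+3)) * card ?X))" by (simp only: of_nat_le_iff)
  then show "real (card {e \<in> tree_edges Hs. \<exists>S. completed_copy r (VG \<union> tree_vertices Hs) (EG \<union> tree_edges Hs) S \<and> e \<subseteq> S})
      \<le> real ((r+1) * (1 + (2*r-4)*(r+3))) * real (card ?X)"
    by (simp only: of_nat_mult mult.assoc)
qed


end
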